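(* Let $N$ divide $n$, $\mathfrak g=\mathfrak{sl}_N(\mathbb C)$ and $V_N=(\mathbb C[\mathfrak g]\otimes(\mathbb C^N)^{\otimes n})^{\mathfrak g}$. There is an algebra homomorphism $\zeta_N:H_n(N/n)\to\mathrm{End}(V_N)$ with $\zeta_N(s_{ij})=s_{ij}$ (permutation of tensor factors), $\zeta_N(\mathrm x_i)=X_i$, $\zeta_N(\mathrm y_i)=Y_i$, where for $f\in V_N$ and $A\in\mathfrak g$, $(X_if)(A)=A_if(A)$ and $(Y_if)(A)=\frac Nn\sum_p(b_p)_i\frac{\partial f}{\partial b_p}(A)$.
   Context: $\mathfrak g$ acts on $\mathbb C[\mathfrak g]$ by the (infinitesimal) adjoint action and on $(\mathbb C^N)^{\otimes n}$ diagonally. For a matrix $B$, $B_i$ denotes $B$ acting on the $i$-th tensor factor of $(\mathbb C^N)^{\otimes n}$. $\{b_p\}$ is an orthonormal basis of $\mathfrak g$ with respect to the trace form $(A,B)\mapsto\mathrm{tr}(AB)$, and $\partial/\partial b_p$ is the derivative in direction $b_p$. $H_n(k)$ is the rational Cherednik algebra of type $A_{n-1}$: the quotient of $\mathbb C[S_n]\ltimes\mathbb C\langle\mathrm x_1,\dots,\mathrm x_n,\mathrm y_1,\dots,\mathrm y_n\rangle$ by $\sum\mathrm x_i=0$, $\sum\mathrm y_i=0$, $[\mathrm x_i,\mathrm x_j]=[\mathrm y_i,\mathrm y_j]=0$, $[\mathrm x_i,\mathrm y_j]=\frac1n-ks_{ij}$ ($i\ne j$). *)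

theory Defs
  imports "HOL-Analysis.Analysis" "HOL-Combinatorics.Transposition" "HOL-Library.Function_Algebras"
begin

text \<open>Matrices in gl_N are complex^'N^'N (N = CARD('N)); the tensor power
 (C^N)^{\<otimes>n} (n = CARD('n)) is represented by coefficient arrays
 ('n \<Rightarrow> 'N) \<Rightarrow> complex.  Elements of C[g] \<otimes> (C^N)^{\<otimes>n} are
 polynomial maps from matrices to tensors, considered on sl_N.\<close>

definition mtr :: "complex^'N^'N \<Rightarrow> complex" where
  "mtr A = (\<Sum>i\<in>UNIV. A$i$i)"

definition sl :: "(complex^'N^'N) set" where
  "sl = {A. mtr A = 0}"

definition mscale :: "complex \<Rightarrow> complex^'N^'N \<Rightarrow> complex^'N^'N" where
  "mscale t B = (\<chi> i j. t * B$i$j)"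

type_synonym ('N,'n) vfun = "complex^'N^'N \<Rightarrow> ('n \<Rightarrow> 'N) \<Rightarrow> complex"

inductive_set polyfun :: "(complex^'N^'N \<Rightarrow> complex) set" where
  pf_const: "(\<lambda>A. c) \<in> polyfun"
| pf_coord: "(\<lambda>A. A$i$j) \<in> polyfun"
| pf_add: "p \<in> polyfun \<Longrightarrow> q \<in> polyfun \<Longrightarrow> (\<lambda>A. p A + q A) \<in> polyfun"
| pf_mult: "p \<in> polyfun \<Longrightarrow> q \<in> polyfun \<Longrightarrow> (\<lambda>A. p A * q A) \<in> polyfun"

definition act_on :: "complex^'N^'N \<Rightarrow> 'n \<Rightarrow> (('n \<Rightarrow> 'N) \<Rightarrow> complex) \<Rightarrow> (('n \<Rightarrow> 'N) \<Rightarrow> complex)" where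
  "act_on B i v = (\<lambda>w. \<Sum>k\<in>UNIV. B$(w i)$k * v (w(i := k)))"

text \<open>Permutation sigma of the tensor factors (moves factor j to position sigma j).\<close>
definition perm_act :: "('n \<Rightarrow> 'n) \<Rightarrow> (('n \<Rightarrow> 'N) \<Rightarrow> complex) \<Rightarrow> (('n \<Rightarrow> 'N) \<Rightarrow> complex)" where
  "perm_act \<sigma> v = (\<lambda>w. v (w \<circ> \<sigma>))"

definition dirderiv :: "(complex^'N^'N \<Rightarrow> ('n \<Rightarrow> 'N) \<Rightarrow> complex) \<Rightarrow> complex^'N^'N \<Rightarrow> complex^'N^'N
     \<Rightarrow> ('n \<Rightarrow> 'N) \<Rightarrow> complex" where
  "dirderiv f A B = (\<lambda>w. deriv (\<lambda>t. f (A + mscale t B) w) 0)"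

text \<open>V_N = (C[g] \<otimes> (C^N)^{\<otimes>n})^g: polynomial maps invariant under the
 infinitesimal adjoint action: (B.f)(A) = - df_A([B,A]) + \<Sum>_i B_i f(A) = 0.
 Two such maps agreeing on sl are the same element of V_N.\<close>
definition VN :: "(complex^'N^'N \<Rightarrow> ('n \<Rightarrow> 'N) \<Rightarrow> complex) set" where
  "VN = {f. (\<forall>w. (\<lambda>A. f A w) \<in> polyfun) \<and>
            (\<forall>A\<in>sl. \<forall>B\<in>sl. dirderiv f A (B ** A - A ** B) = (\<Sum>i\<in>UNIV. act_on B i (f A)))}"

definition eqV :: "((complex^'N^'N \<Rightarrow> ('n \<Rightarrow> 'N) \<Rightarrow> complex) \<Rightarrow> (complex^'N^'N \<Rightarrow> ('n \<Rightarrow> 'N) \<Rightarrow> complex))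
   \<Rightarrow> ((complex^'N^'N \<Rightarrow> ('n \<Rightarrow> 'N) \<Rightarrow> complex) \<Rightarrow> (complex^'N^'N \<Rightarrow> ('n \<Rightarrow> 'N) \<Rightarrow> complex)) \<Rightarrow> bool" where
  "eqV F G = (\<forall>f\<in>VN. \<forall>A\<in>sl. F f A = G f A)"

definition Pop :: "('n \<Rightarrow> 'n) \<Rightarrow> (complex^'N^'N \<Rightarrow> ('n \<Rightarrow> 'N) \<Rightarrow> complex) \<Rightarrow> (complex^'N^'N \<Rightarrow> ('n \<Rightarrow> 'N) \<Rightarrow> complex)" where
  "Pop \<sigma> f = (\<lambda>A. perm_act \<sigma> (f A))"

definition Xop :: "'n \<Rightarrow> (complex^'N^'N \<Rightarrow> ('n \<Rightarrow> 'N) \<Rightarrow> complex) \<Rightarrow> (complex^'N^'N \<Rightarrow> ('n \<Rightarrow> 'N) \<Rightarrow> complex)" where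
  "Xop i f = (\<lambda>A. act_on A i (f A))"

definition Yop :: "(nat \<Rightarrow> complex^'N^'N) \<Rightarrow> 'n \<Rightarrow> (complex^'N^'N \<Rightarrow> ('n \<Rightarrow> 'N) \<Rightarrow> complex) \<Rightarrow> (complex^'N^'N \<Rightarrow> ('n \<Rightarrow> 'N) \<Rightarrow> complex)" where
  "Yop b i f = (\<lambda>A w. (of_nat CARD('N) / of_nat CARD('n)) *
        (\<Sum>p<CARD('N)^2 - 1. act_on (b p) i (dirderiv f A (b p))) w)"

definition orthonormal_sl_basis :: "(nat \<Rightarrow> complex^'N^'N) \<Rightarrow> bool" where
  "orthonormal_sl_basis b = ((\<forall>p<CARD('N)^2 - 1. b p \<in> sl) \<and>
     (\<forall>p<CARD('N)^2 - 1. \<forall>q<CARD('N)^2 - 1. mtr (b p ** b q) = (if p = q then 1 else 0)))"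

definition opcomm where "opcomm F G = (\<lambda>f. F (G f) - G (F f))"

end

theory Submission
  imports Defs
begin


lemma sum_fun_apply: "(\<Sum>i\<in>I. f i) x = (\<Sum>i\<in>I. f i x)"
  by (induction I rule: infinite_finite_induct) auto

definition flat :: "complex^'N^'N \<Rightarrow> complex^('N \<times> 'N)" where
  "flat X = (\<chi> ij. X$(fst ij)$(snd ij))"

definition pairf :: "complex^('N \<times> 'N) \<Rightarrow> complex^'N^'N \<Rightarrow> complex" where
  "pairf x Y = (\<Sum>ij\<in>UNIV. x$ij * Y$(snd ij)$(fst ij))"

lemma pairf_flat: "pairf (flat X) Y = mtr (X ** Y)"
proof -
  have "mtr (X ** Y) = (\<Sum>(i,k)\<in>UNIV\<times>UNIV. X $ i $ k * Y $ k $ i)"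
    unfolding mtr_def matrix_matrix_mult_def by (simp add: sum.cartesian_product)
  then show ?thesis unfolding pairf_def flat_def by (simp add: case_prod_beta)
qed

lemma pairf_sum: "finite P \<Longrightarrow> pairf (\<Sum>p\<in>P. u p *s v p) Y = (\<Sum>p\<in>P. u p * pairf (v p) Y)"
  unfolding pairf_def
  by (simp add: sum_distrib_left sum_distrib_right mult.assoc sum.swap[of _ P])

definition Emat :: "'N \<Rightarrow> 'N \<Rightarrow> complex^'N^'N" where
  "Emat e d = (\<chi> i j. if i = e \<and> j = d then 1 else 0)"

lemma mtr_Emat_mult: "mtr (Emat e d ** B) = B$d$e"
proof -
  have "(\<Sum>k\<in>UNIV. (if i = e \<and> k = d then 1 else 0) * B$k$i) = (if i = e then B$d$e else 0)" for i
  proof (cases "i = e")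
    case True
    have "\<And>k. (if k = d then 1 else 0) * B$k$i = (if k = d then B$d$i else 0)" by simp
    then show ?thesis using True by simp
  qed simp
  then show ?thesis unfolding mtr_def Emat_def matrix_matrix_mult_def by simp
qed

lemma mtr_Emat: "mtr (Emat e d) = (if e = d then 1 else 0)"
  unfolding mtr_def Emat_def by (cases "e = d") (auto intro: sum.neutral)

lemma mtr_one_mult: "mtr (mat 1 ** B) = mtr B" by simp
lemma mtr_mult_one: "mtr (B ** mat 1) = mtr B" by simp
lemma mtr_one: "mtr (mat 1 :: complex^'N^'N) = of_nat CARD('N)"
  unfolding mtr_def mat_def by simp

lemma casimir_gen:
  fixes b :: "nat \<Rightarrow> complex^'N^'N"
  assumes ob: "orthonormal_sl_basis b"
  shows "X$a$c = (\<Sum>p<CARD('N)^2 - 1. mtr (X ** b p) * (b p)$a$c) + mtr X / of_nat CARD('N) * (if a = c then 1 else 0)"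
proof -
  define M where "M = CARD('N)^2 - 1"
  have bsl: "\<And>p. p < M \<Longrightarrow> mtr (b p) = 0" using ob unfolding orthonormal_sl_basis_def sl_def M_def by auto
  have orth: "\<And>p q. p < M \<Longrightarrow> q < M \<Longrightarrow> mtr (b p ** b q) = (if p = q then 1 else 0)"
    using ob unfolding orthonormal_sl_basis_def M_def by auto
  define v where "v p = (if p < M then flat (b p) else flat (mat 1 :: complex^'N^'N))" for p
  have Npos: "(of_nat CARD('N) :: complex) \<noteq> 0" by simp
  have pv_b: "pairf (v p) (b q) = (if p = q then 1 else 0)" if "p \<le> M" "q < M" for p q
    using that orth[of p q] bsl[of q] unfolding v_def by (auto simp: pairf_flat)
  have pv_1: "pairf (v p) (mat 1) = (if p = M then of_nat CARD('N) else 0)" if "p \<le> M" for p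
    using that bsl[of p] unfolding v_def by (auto simp: pairf_flat mtr_one)
  have inj: "inj_on v {..M}"
  proof (rule inj_onI)
    fix p q assume p: "p \<in> {..M}" and q: "q \<in> {..M}" and e: "v p = v q"
    show "p = q"
    proof (cases "q < M")
      case True
      then show ?thesis using pv_b[of p q] pv_b[of q q] p q e by (auto split: if_splits)
    next
      case False
      then have "q = M" using q by auto
      then show ?thesis using pv_1[of p] pv_1[of q] p q e Npos by (auto split: if_splits)
    qed
  qed
  define T where "T = v ` {..M}"
  have finT: "finite T" unfolding T_def by simp
  have indep: "vec.independent T"
    unfolding vec.independent_explicit
  proof (intro conjI allI impI ballI)
    show "finite T" by (rule finT)
    fix c x assume h: "(\<Sum>v\<in>T. c v *s v) = 0" and x: "x \<in> T"
    have h2: "(\<Sum>p\<le>M. c (v p) *s v p) = 0"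
      using h unfolding T_def by (simp add: sum.reindex[OF inj])
    from x obtain q where q: "q \<le> M" "x = v q" unfolding T_def by auto
    show "c x = 0"
    proof (cases "q < M")
      case True
      have "0 = pairf (\<Sum>p\<le>M. c (v p) *s v p) (b q)" using h2 by (simp add: pairf_def)
      also have "\<dots> = (\<Sum>p\<le>M. c (v p) * (if p = q then 1 else 0))"
        by (simp add: pairf_sum pv_b True)
      also have "\<dots> = c (v q)" using q by (simp add: if_distrib[of "\<lambda>x. _ * x"] sum.delta cong: if_cong)
      finally show ?thesis using q by simp
    next
      case False
      then have qM: "q = M" using q by auto
      have "0 = pairf (\<Sum>p\<le>M. c (v p) *s v p) (mat 1)" using h2 by (simp add: pairf_def)
      also have "\<dots> = (\<Sum>p\<le>M. c (v p) * (if p = M then of_nat CARD('N) else 0))"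
        by (simp add: pairf_sum pv_1)
      also have "\<dots> = c (v M) * of_nat CARD('N)" by (simp add: if_distrib[of "\<lambda>x. _ * x"] sum.delta cong: if_cong)
      finally show ?thesis using q qM Npos by simp
    qed
  qed
  have cardT: "card T = vec.dim (UNIV :: (complex^('N\<times>'N)) set)"
  proof -
    have "card T = M + 1" unfolding T_def using card_image[OF inj] by simp
    also have "\<dots> = CARD('N)^2" unfolding M_def
      using Suc_pred[of "CARD('N)^2"] by simp
    also have "\<dots> = CARD('N \<times> 'N)" by (simp add: power2_eq_square)
    finally show ?thesis by (simp add: card_cart_basis)
  qed
  have "UNIV \<subseteq> vec.span T" using vec.card_eq_dim[OF _ cardT finT] indep by simp
  then have "flat X \<in> vec.span T" by auto
  then obtain u where u: "flat X = (\<Sum>x\<in>T. u x *s x)" unfolding vec.span_finite[OF finT] by auto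
  then have u2: "flat X = (\<Sum>p\<le>M. u (v p) *s v p)" unfolding T_def by (simp add: sum.reindex[OF inj])
  have uq: "u (v q) = mtr (X ** b q)" if "q < M" for q
  proof -
    have "mtr (X ** b q) = pairf (\<Sum>p\<le>M. u (v p) *s v p) (b q)" unfolding u2[symmetric] by (rule pairf_flat[symmetric])
    also have "\<dots> = (\<Sum>p\<le>M. u (v p) * (if p = q then 1 else 0))"
      by (simp add: pairf_sum pv_b that)
    also have "\<dots> = u (v q)" using that by (simp add: if_distrib[of "\<lambda>x. _ * x"] sum.delta cong: if_cong)
    finally show ?thesis by simp
  qed
  have uM: "u (v M) = mtr X / of_nat CARD('N)"
  proof -
    have "mtr X = pairf (\<Sum>p\<le>M. u (v p) *s v p) (mat 1)" unfolding u2[symmetric] pairf_flat by simp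
    also have "\<dots> = (\<Sum>p\<le>M. u (v p) * (if p = M then of_nat CARD('N) else 0))"
      by (simp add: pairf_sum pv_1)
    also have "\<dots> = u (v M) * of_nat CARD('N)" by (simp add: if_distrib[of "\<lambda>x. _ * x"] sum.delta cong: if_cong)
    finally show ?thesis using Npos by (simp add: field_simps)
  qed
  have "X$a$c = (flat X)$(a,c)" unfolding flat_def by simp
  also have "\<dots> = (\<Sum>p\<le>M. u (v p) * (v p)$(a,c))" unfolding u2 by (simp add: sum_component)
  also have "\<dots> = (\<Sum>p<M. u (v p) * (v p)$(a,c)) + u (v M) * (v M)$(a,c)"
    by (simp add: lessThan_Suc_atMost[symmetric])
  also have "\<dots> = (\<Sum>p<M. mtr (X ** b p) * (b p)$a$c) + mtr X / of_nat CARD('N) * (if a = c then 1 else 0)"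
  proof -
    have "(\<Sum>p<M. u (v p) * (v p)$(a,c)) = (\<Sum>p<M. mtr (X ** b p) * (b p)$a$c)"
    proof (rule sum.cong)
      fix p assume "p \<in> {..<M}"
      then show "u (v p) * (v p)$(a,c) = mtr (X ** b p) * (b p)$a$c"
        using uq[of p] by (simp add: v_def flat_def)
    qed simp
    moreover have "u (v M) * (v M)$(a,c) = mtr X / of_nat CARD('N) * (if a = c then 1 else 0)"
      unfolding uM by (simp add: v_def flat_def mat_def)
    ultimately show ?thesis by simp
  qed
  finally show ?thesis unfolding M_def .
qed

lemma casimir:
  fixes b :: "nat \<Rightarrow> complex^'N^'N"
  assumes ob: "orthonormal_sl_basis b"
  shows "(\<Sum>p<CARD('N)^2 - 1. (b p)$a$c * (b p)$d$e) =
     (if a = e \<and> c = d then 1 else 0) - (if a = c \<and> d = e then 1 / of_nat CARD('N) else 0)"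
proof -
  have "(Emat e d :: complex^'N^'N)$a$c = (\<Sum>p<CARD('N)^2 - 1. (b p)$d$e * (b p)$a$c) + (if e = d then 1 else 0) / of_nat CARD('N) * (if a = c then 1 else 0)"
    using casimir_gen[OF ob, of "Emat e d" a c] by (simp only: mtr_Emat_mult mtr_Emat)
  moreover have "(Emat e d :: complex^'N^'N)$a$c = (if a = e \<and> c = d then 1 else 0)" by (simp add: Emat_def)
  ultimately show ?thesis by (auto simp: mult.commute)
qed



lemma mscale_comp[simp]: "(mscale t B)$i$j = t * B$i$j"
  by (simp add: mscale_def)

lemma ifmult[simp]: "(if P then 1 else 0) * (x::complex) = (if P then x else 0)"
  "(x::complex) * (if P then 1 else 0) = (if P then x else 0)"
  by auto

lemma mscale_zero[simp]: "mscale 0 B = 0"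
  by (simp add: mscale_def vec_eq_iff)

lemma pf_cmult: "p \<in> polyfun \<Longrightarrow> (\<lambda>A. c * p A) \<in> polyfun"
  by (rule pf_mult[OF pf_const])

lemma pf_sum: "finite I \<Longrightarrow> (\<And>i. i \<in> I \<Longrightarrow> f i \<in> polyfun) \<Longrightarrow> (\<lambda>A. \<Sum>i\<in>I. f i A) \<in> polyfun"
proof (induction I rule: finite_induct)
  case empty then show ?case using pf_const[of 0] by simp
next
  case (insert x F)
  then show ?case by (simp add: pf_add)
qed

lemma pf_diff: "p \<in> polyfun \<Longrightarrow> q \<in> polyfun \<Longrightarrow> (\<lambda>A. p A - q A) \<in> polyfun"
  using pf_add[OF _ pf_cmult[of q "-1"], of p] by simp

lemma Emat_comp: "(Emat a b)$c$d = (if c = a \<and> d = b then 1 else 0)"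
  by (simp add: Emat_def)

lemma sum_Emat: "(\<Sum>c\<in>UNIV. \<Sum>d\<in>UNIV. (Emat a b)$c$d * g c d) = g a b"
proof -
  have "(\<Sum>d\<in>UNIV. (Emat a b)$c$d * g c d) = (if c = a then g a b else 0)" for c
    by (cases "c = a") (simp_all add: Emat_comp)
  then show ?thesis by simp
qed

lemma poly_deriv_ex:
  assumes "p \<in> polyfun"
  shows "\<exists>D. (\<forall>a b. D a b \<in> polyfun) \<and>
    (\<forall>A B. ((\<lambda>t. p (A + mscale t B)) has_field_derivative
        (\<Sum>a\<in>UNIV. \<Sum>b\<in>UNIV. B$a$b * D a b A)) (at 0))"
  using assms
proof (induction rule: polyfun.induct)
  case (pf_const c)
  show ?case by (rule exI[of _ "\<lambda>a b A. 0"]) (auto intro: polyfun.pf_const)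
next
  case (pf_coord i j)
  show ?case
  proof (rule exI[of _ "\<lambda>a b A. if a = i \<and> b = j then 1 else 0"], intro conjI allI)
    fix a b show "(\<lambda>A. if a = i \<and> b = j then 1 else 0) \<in> polyfun" by (rule polyfun.pf_const)
  next
    fix A B :: "complex^'a^'a"
    have "((\<lambda>t. A$i$j + t * B$i$j) has_field_derivative B$i$j) (at 0)"
      by (auto intro!: derivative_eq_intros)
    moreover have "(\<Sum>a\<in>UNIV. \<Sum>b\<in>UNIV. B$a$b * (if a = i \<and> b = j then 1 else 0)) = B$i$j"
      using sum_Emat[of i j "\<lambda>a b. B$a$b"] by (simp add: Emat_comp mult.commute)
    ultimately show "((\<lambda>t. (A + mscale t B)$i$j) has_field_derivative
        (\<Sum>a\<in>UNIV. \<Sum>b\<in>UNIV. B$a$b * (if a = i \<and> b = j then 1 else 0))) (at 0)" by simp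
  qed
next
  case (pf_add p q)
  then obtain Dp Dq where p: "(\<forall>a b. Dp a b \<in> polyfun)"
    "\<forall>A B. ((\<lambda>t. p (A + mscale t B)) has_field_derivative (\<Sum>a\<in>UNIV. \<Sum>b\<in>UNIV. B$a$b * Dp a b A)) (at 0)"
    and q: "(\<forall>a b. Dq a b \<in> polyfun)"
    "\<forall>A B. ((\<lambda>t. q (A + mscale t B)) has_field_derivative (\<Sum>a\<in>UNIV. \<Sum>b\<in>UNIV. B$a$b * Dq a b A)) (at 0)"
    by blast
  show ?case
  proof (rule exI[of _ "\<lambda>a b A. Dp a b A + Dq a b A"], intro conjI allI)
    fix a b show "(\<lambda>A. Dp a b A + Dq a b A) \<in> polyfun" using p q by (simp add: polyfun.pf_add)
  next
    fix A B :: "complex^'a^'a"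
    show "((\<lambda>t. p (A + mscale t B) + q (A + mscale t B)) has_field_derivative
        (\<Sum>a\<in>UNIV. \<Sum>b\<in>UNIV. B$a$b * (Dp a b A + Dq a b A))) (at 0)"
      using DERIV_add[OF p(2)[rule_format, of A B] q(2)[rule_format, of A B]]
      by (simp add: distrib_left sum.distrib)
  qed
next
  case (pf_mult p q)
  then obtain Dp Dq where p: "(\<forall>a b. Dp a b \<in> polyfun)"
    "\<forall>A B. ((\<lambda>t. p (A + mscale t B)) has_field_derivative (\<Sum>a\<in>UNIV. \<Sum>b\<in>UNIV. B$a$b * Dp a b A)) (at 0)"
    and q: "(\<forall>a b. Dq a b \<in> polyfun)"
    "\<forall>A B. ((\<lambda>t. q (A + mscale t B)) has_field_derivative (\<Sum>a\<in>UNIV. \<Sum>b\<in>UNIV. B$a$b * Dq a b A)) (at 0)"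
    by blast
  show ?case
  proof (rule exI[of _ "\<lambda>a b A. Dp a b A * q A + p A * Dq a b A"], intro conjI allI)
    fix a b show "(\<lambda>A. Dp a b A * q A + p A * Dq a b A) \<in> polyfun"
      using p q pf_mult.hyps by (simp add: polyfun.pf_add polyfun.pf_mult)
  next
    fix A B :: "complex^'a^'a"
    show "((\<lambda>t. p (A + mscale t B) * q (A + mscale t B)) has_field_derivative
        (\<Sum>a\<in>UNIV. \<Sum>b\<in>UNIV. B$a$b * (Dp a b A * q A + p A * Dq a b A))) (at 0)"
    proof -
      have d: "((\<lambda>t. p (A + mscale t B) * q (A + mscale t B)) has_field_derivative
         (\<Sum>a\<in>UNIV. \<Sum>b\<in>UNIV. B$a$b * Dp a b A) * q A + (\<Sum>a\<in>UNIV. \<Sum>b\<in>UNIV. B$a$b * Dq a b A) * p A) (at 0)"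
        using DERIV_mult[OF p(2)[rule_format, of A B] q(2)[rule_format, of A B]] by simp
      have pw: "B$a$b * (Dp a b A * q A + p A * Dq a b A) = B$a$b * Dp a b A * q A + B$a$b * Dq a b A * p A" for a b
        by (simp add: algebra_simps)
      have e: "(\<Sum>a\<in>UNIV. \<Sum>b\<in>UNIV. B$a$b * (Dp a b A * q A + p A * Dq a b A)) =
         (\<Sum>a\<in>UNIV. \<Sum>b\<in>UNIV. B$a$b * Dp a b A) * q A + (\<Sum>a\<in>UNIV. \<Sum>b\<in>UNIV. B$a$b * Dq a b A) * p A"
        by (simp only: pw sum.distrib sum_distrib_right)
      show ?thesis unfolding e by (rule d)
    qed
  qed
qed

definition pd :: "'N \<Rightarrow> 'N \<Rightarrow> (complex^'N^'N \<Rightarrow> complex) \<Rightarrow> (complex^'N^'N \<Rightarrow> complex)" where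
  "pd a b p = (\<lambda>A. deriv (\<lambda>t. p (A + mscale t (Emat a b))) 0)"

lemma pd_unique:
  assumes "\<And>A B. ((\<lambda>t. p (A + mscale t B)) has_field_derivative
        (\<Sum>a\<in>UNIV. \<Sum>b\<in>UNIV. B$a$b * D a b A)) (at 0)"
  shows "pd a b p = D a b"
proof
  fix A
  show "pd a b p A = D a b A"
    unfolding pd_def using DERIV_imp_deriv[OF assms[of A "Emat a b"]] sum_Emat[of a b "\<lambda>c d. D c d A"]
    by simp
qed

lemma pd_polyfun: "p \<in> polyfun \<Longrightarrow> pd a b p \<in> polyfun"
proof -
  assume "p \<in> polyfun"
  then obtain D where D1: "\<forall>a b. D a b \<in> polyfun" and D2: "\<forall>A B. ((\<lambda>t. p (A + mscale t B)) has_field_derivative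
        (\<Sum>a\<in>UNIV. \<Sum>b\<in>UNIV. B$a$b * D a b A)) (at 0)" using poly_deriv_ex by blast
  have "pd a b p = D a b" by (rule pd_unique) (use D2 in blast)
  with D1 show ?thesis by simp
qed

lemma pd_deriv: "p \<in> polyfun \<Longrightarrow> ((\<lambda>t. p (A + mscale t B)) has_field_derivative
        (\<Sum>a\<in>UNIV. \<Sum>b\<in>UNIV. B$a$b * pd a b p A)) (at 0)"
proof -
  assume "p \<in> polyfun"
  then obtain D where D: "\<forall>A B. ((\<lambda>t. p (A + mscale t B)) has_field_derivative
        (\<Sum>a\<in>UNIV. \<Sum>b\<in>UNIV. B$a$b * D a b A)) (at 0)" using poly_deriv_ex by blast
  have "pd a b p = D a b" for a b by (rule pd_unique) (use D in blast)
  then show ?thesis using D by simp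
qed

lemma pd_const: "pd a b (\<lambda>A. c) = (\<lambda>A. 0)"
  by (rule pd_unique) simp

lemma pd_coord: "pd a b (\<lambda>A. A$i$j) = (\<lambda>A. if a = i \<and> b = j then 1 else 0)"
proof (rule pd_unique)
  fix A B :: "complex^'a^'a"
  have "((\<lambda>t. A$i$j + t * B$i$j) has_field_derivative B$i$j) (at 0)"
    by (auto intro!: derivative_eq_intros)
  moreover have "(\<Sum>a\<in>UNIV. \<Sum>b\<in>UNIV. B$a$b * (if a = i \<and> b = j then 1 else 0)) = B$i$j"
    using sum_Emat[of i j "\<lambda>a b. B$a$b"] by (simp add: Emat_comp mult.commute)
  ultimately show "((\<lambda>t. (A + mscale t B)$i$j) has_field_derivative
      (\<Sum>a\<in>UNIV. \<Sum>b\<in>UNIV. B$a$b * (if a = i \<and> b = j then 1 else 0))) (at 0)" by simp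
qed

lemma pd_add: "p \<in> polyfun \<Longrightarrow> q \<in> polyfun \<Longrightarrow> pd a b (\<lambda>A. p A + q A) = (\<lambda>A. pd a b p A + pd a b q A)"
  by (rule pd_unique[where D="\<lambda>a b A. pd a b p A + pd a b q A"])
     (use DERIV_add[OF pd_deriv pd_deriv] in \<open>simp add: distrib_left sum.distrib\<close>)

lemma pd_mult: "p \<in> polyfun \<Longrightarrow> q \<in> polyfun \<Longrightarrow> pd a b (\<lambda>A. p A * q A) = (\<lambda>A. pd a b p A * q A + p A * pd a b q A)"
proof (rule pd_unique[where D="\<lambda>a b A. pd a b p A * q A + p A * pd a b q A"])
  fix A B :: "complex^'a^'a"
  assume p: "p \<in> polyfun" and q: "q \<in> polyfun"
  have d: "((\<lambda>t. p (A + mscale t B) * q (A + mscale t B)) has_field_derivative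
     (\<Sum>a\<in>UNIV. \<Sum>b\<in>UNIV. B$a$b * pd a b p A) * q A + (\<Sum>a\<in>UNIV. \<Sum>b\<in>UNIV. B$a$b * pd a b q A) * p A) (at 0)"
    using DERIV_mult[OF pd_deriv[OF p] pd_deriv[OF q]] by simp
  have pw: "B$a$b * (pd a b p A * q A + p A * pd a b q A) = B$a$b * pd a b p A * q A + B$a$b * pd a b q A * p A" for a b
    by (simp add: algebra_simps)
  have e: "(\<Sum>a\<in>UNIV. \<Sum>b\<in>UNIV. B$a$b * (pd a b p A * q A + p A * pd a b q A)) =
     (\<Sum>a\<in>UNIV. \<Sum>b\<in>UNIV. B$a$b * pd a b p A) * q A + (\<Sum>a\<in>UNIV. \<Sum>b\<in>UNIV. B$a$b * pd a b q A) * p A"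
    by (simp only: pw sum.distrib sum_distrib_right)
  show "((\<lambda>t. p (A + mscale t B) * q (A + mscale t B)) has_field_derivative
     (\<Sum>a\<in>UNIV. \<Sum>b\<in>UNIV. B$a$b * (pd a b p A * q A + p A * pd a b q A))) (at 0)" unfolding e by (rule d)
qed

lemma pd_comm: "p \<in> polyfun \<Longrightarrow> pd a b (pd c d p) = pd c d (pd a b p)"
proof (induction rule: polyfun.induct)
  case (pf_const c) then show ?case by (simp add: pd_const)
next
  case (pf_coord i j) then show ?case by (simp add: pd_coord pd_const)
next
  case (pf_add p q) then show ?case by (simp add: pd_add pd_polyfun)
next
  case (pf_mult p q)
  have e: "pd a b (pd c d (\<lambda>A. p A * q A)) = (\<lambda>A. pd a b (pd c d p) A * q A + pd c d p A * pd a b q A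
       + (pd a b p A * pd c d q A + p A * pd a b (pd c d q) A))" for a b c d
  proof -
    have "pd a b (pd c d (\<lambda>A. p A * q A)) = pd a b (\<lambda>A. pd c d p A * q A + p A * pd c d q A)"
      using pf_mult.hyps by (simp only: pd_mult)
    also have "\<dots> = (\<lambda>A. pd a b (\<lambda>A. pd c d p A * q A) A + pd a b (\<lambda>A. p A * pd c d q A) A)"
      by (rule pd_add) (use pf_mult.hyps pd_polyfun in \<open>auto intro: polyfun.pf_mult\<close>)
    also have "\<dots> = (\<lambda>A. pd a b (pd c d p) A * q A + pd c d p A * pd a b q A
       + (pd a b p A * pd c d q A + p A * pd a b (pd c d q) A))"
      by (simp only: pd_mult[OF pd_polyfun[OF pf_mult.hyps(1)] pf_mult.hyps(2)] pd_mult[OF pf_mult.hyps(1) pd_polyfun[OF pf_mult.hyps(2)]])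
    finally show ?thesis .
  qed
  show ?case unfolding e pf_mult.IH by (rule ext) (simp only: add_ac mult_ac)
qed



lemma act_on_comm:
  assumes "i \<noteq> j"
  shows "act_on M i (act_on L j v) = act_on L j (act_on M i v)"
proof
  fix w
  have "act_on M i (act_on L j v) w = (\<Sum>k\<in>UNIV. \<Sum>l\<in>UNIV. M$(w i)$k * (L$(w j)$l * v (w(i := k, j := l))))"
    using assms by (simp add: act_on_def sum_distrib_left)
  also have "\<dots> = (\<Sum>l\<in>UNIV. \<Sum>k\<in>UNIV. M$(w i)$k * (L$(w j)$l * v (w(i := k, j := l))))"
    by (rule sum.swap)
  also have "\<dots> = act_on L j (act_on M i v) w"
    using assms by (simp add: act_on_def sum_distrib_left fun_upd_twist mult_ac)
  finally show "act_on M i (act_on L j v) w = act_on L j (act_on M i v) w" .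
qed

lemma act_on_mult: "act_on M i (act_on L i v) = act_on (M ** L) i v"
proof
  fix w
  have "act_on M i (act_on L i v) w = (\<Sum>k\<in>UNIV. \<Sum>l\<in>UNIV. M$(w i)$k * (L$k$l * v (w(i := l))))"
    by (simp add: act_on_def sum_distrib_left)
  also have "\<dots> = (\<Sum>l\<in>UNIV. \<Sum>k\<in>UNIV. M$(w i)$k * (L$k$l * v (w(i := l))))"
    by (rule sum.swap)
  also have "\<dots> = act_on (M ** L) i v w"
    by (simp add: act_on_def matrix_matrix_mult_def sum_distrib_left sum_distrib_right mult_ac)
  finally show "act_on M i (act_on L i v) w = act_on (M ** L) i v w" .
qed

lemma act_on_addM: "act_on (M + L) i v w = act_on M i v w + act_on L i v w"
  by (simp add: act_on_def distrib_right sum.distrib)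

lemma act_on_diffM: "act_on (M - L) i v w = act_on M i v w - act_on L i v w"
  by (simp add: act_on_def left_diff_distrib sum_subtractf)

lemma act_on_zeroM: "act_on 0 i v w = 0"
  by (simp add: act_on_def)

lemma act_on_sumv: "act_on M i (\<lambda>u. \<Sum>j\<in>J. h j u) w = (\<Sum>j\<in>J. act_on M i (h j) w)"
  by (simp add: act_on_def sum_distrib_left sum.swap[of _ J])

lemma act_on_sumf: "act_on M i (\<Sum>j\<in>J. h j) w = (\<Sum>j\<in>J. act_on M i (h j) w)"
  by (simp add: act_on_def sum_fun_apply sum_distrib_left sum.swap[of _ J])

lemma act_on_cmultv: "act_on M i (\<lambda>u. c * h u) w = c * act_on M i h w"
  by (simp add: act_on_def sum_distrib_left mult_ac)

lemma act_on_addv: "act_on M i (\<lambda>u. g u + h u) w = act_on M i g w + act_on M i h w"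
  by (simp add: act_on_def distrib_left sum.distrib)

lemma act_on_diffv: "act_on M i (\<lambda>u. g u - h u) w = act_on M i g w - act_on M i h w"
  by (simp add: act_on_def right_diff_distrib sum_subtractf)

lemma act_on_sum_comm:
  fixes v :: "('n::finite \<Rightarrow> 'N::finite) \<Rightarrow> complex"
  shows "(\<Sum>j\<in>UNIV. act_on X i (act_on B j v) w) = (\<Sum>j\<in>UNIV. act_on B j (act_on X i v) w) + act_on (X ** B - B ** X) i v w"
proof -
  have "(\<Sum>j\<in>UNIV. act_on X i (act_on B j v) w) = act_on X i (act_on B i v) w + (\<Sum>j\<in>UNIV - {i}. act_on X i (act_on B j v) w)"
    by (rule sum.remove) auto
  also have "(\<Sum>j\<in>UNIV - {i}. act_on X i (act_on B j v) w) = (\<Sum>j\<in>UNIV - {i}. act_on B j (act_on X i v) w)"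
    by (rule sum.cong) (auto simp: act_on_comm)
  also have "act_on X i (act_on B i v) w = act_on B i (act_on X i v) w + act_on (X ** B - B ** X) i v w"
    by (simp add: act_on_mult act_on_diffM)
  also have "act_on B i (act_on X i v) w + act_on (X ** B - B ** X) i v w + (\<Sum>j\<in>UNIV - {i}. act_on B j (act_on X i v) w)
     = ((\<Sum>j\<in>UNIV. act_on B j (act_on X i v) w)) + act_on (X ** B - B ** X) i v w"
    by (subst sum.remove[of UNIV i]) auto
  finally show ?thesis .
qed

lemma act_on_perm:
  assumes "bij \<sigma>"
  shows "act_on B i (\<lambda>u. v (u \<circ> \<sigma>)) w = act_on B (inv \<sigma> i) v (w \<circ> \<sigma>)"
proof -
  have s: "\<sigma> (inv \<sigma> i) = i" using assms by (simp add: bij_def surj_f_inv_f)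
  have e: "(w(i := k)) \<circ> \<sigma> = (w \<circ> \<sigma>)(inv \<sigma> i := k)" for k
  proof
    fix x
    have "\<sigma> x = i \<longleftrightarrow> x = inv \<sigma> i" using assms s by (metis bij_inv_eq_iff)
    then show "((w(i := k)) \<circ> \<sigma>) x = ((w \<circ> \<sigma>)(inv \<sigma> i := k)) x" by auto
  qed
  show ?thesis unfolding act_on_def using s e by simp
qed

lemma act_on_Emat: "act_on X i v w = (\<Sum>a\<in>UNIV. \<Sum>b\<in>UNIV. X$a$b * act_on (Emat a b) i v w)"
proof -
  have "act_on (Emat a b) i v w = (if a = w i then v (w(i := b)) else 0)" for a b
  proof (cases "a = w i")
    case True
    then show ?thesis by (simp add: act_on_def Emat_comp)
  qed (simp add: act_on_def Emat_comp)
  then have "(\<Sum>b\<in>UNIV. X$a$b * act_on (Emat a b) i v w) = (if a = w i then (\<Sum>b\<in>UNIV. X$a$b * v (w(i := b))) else 0)" for a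
    by (cases "a = w i") auto
  then have "(\<Sum>a\<in>UNIV. \<Sum>b\<in>UNIV. X$a$b * act_on (Emat a b) i v w) = (\<Sum>a\<in>UNIV. if a = w i then (\<Sum>b\<in>UNIV. X$a$b * v (w(i := b))) else 0)"
    by simp
  also have "\<dots> = act_on X i v w" by (simp add: act_on_def)
  finally show ?thesis by simp
qed



definition pv :: "(complex^'N^'N \<Rightarrow> ('n \<Rightarrow> 'N) \<Rightarrow> complex) \<Rightarrow> bool" where
  "pv f = (\<forall>w. (\<lambda>A. f A w) \<in> polyfun)"

lemma dirderiv_apply: "dirderiv g A C w = deriv (\<lambda>t. g (A + mscale t C) w) 0"
  by (simp add: dirderiv_def)

lemma dirderiv_eq: "pv f \<Longrightarrow> dirderiv f A B w = (\<Sum>a\<in>UNIV. \<Sum>b\<in>UNIV. B$a$b * pd a b (\<lambda>A. f A w) A)"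
  unfolding dirderiv_apply pv_def using pd_deriv[of "\<lambda>A. f A w" A B]
  by (simp add: DERIV_imp_deriv)

lemma dirderiv_has: "pv f \<Longrightarrow> ((\<lambda>t. f (A + mscale t B) w) has_field_derivative dirderiv f A B w) (at 0)"
proof -
  assume f: "pv f"
  then show ?thesis unfolding dirderiv_eq[OF f] using pd_deriv[of "\<lambda>A. f A w" A B] by (simp add: pv_def)
qed

lemma pv_dirderiv: "pv f \<Longrightarrow> pv (\<lambda>A. dirderiv f A X)"
proof -
  assume f: "pv f"
  have "(\<lambda>A. dirderiv f A X w) = (\<lambda>A. \<Sum>a\<in>UNIV. \<Sum>b\<in>UNIV. X$a$b * pd a b (\<lambda>A. f A w) A)" for w
    using dirderiv_eq[OF f] by simp
  moreover have "(\<lambda>A. \<Sum>a\<in>UNIV. \<Sum>b\<in>UNIV. X$a$b * pd a b (\<lambda>A. f A w) A) \<in> polyfun" for w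
    using f unfolding pv_def by (intro pf_sum pf_cmult pd_polyfun) auto
  ultimately show ?thesis unfolding pv_def by simp
qed

lemma dirderiv_lin: "pv f \<Longrightarrow> dirderiv f A X w = (\<Sum>a\<in>UNIV. \<Sum>b\<in>UNIV. X$a$b * dirderiv f A (Emat a b) w)"
  by (simp add: dirderiv_eq sum_Emat)

lemma dirderiv_add_dir: "pv f \<Longrightarrow> dirderiv f A (X + mscale t Z) w = dirderiv f A X w + t * dirderiv f A Z w"
  by (simp add: dirderiv_eq algebra_simps sum.distrib sum_distrib_left)

lemma dirderiv_zero_dir: "pv f \<Longrightarrow> dirderiv f A 0 w = 0"
  by (simp add: dirderiv_eq)

lemma dirderiv2_eq:
  assumes f: "pv f"
  shows "dirderiv (\<lambda>A. dirderiv f A X) A Y w =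
    (\<Sum>a\<in>UNIV. \<Sum>b\<in>UNIV. X$a$b * (\<Sum>c\<in>UNIV. \<Sum>d\<in>UNIV. Y$c$d * pd c d (pd a b (\<lambda>A. f A w)) A))"
proof -
  have F: "(\<lambda>A. f A w) \<in> polyfun" using f unfolding pv_def by auto
  have e: "(\<lambda>t. dirderiv f (A + mscale t Y) X w) = (\<lambda>t. \<Sum>a\<in>UNIV. \<Sum>b\<in>UNIV. X$a$b * pd a b (\<lambda>A. f A w) (A + mscale t Y))"
    using dirderiv_eq[OF f] by simp
  have "((\<lambda>t. \<Sum>a\<in>UNIV. \<Sum>b\<in>UNIV. X$a$b * pd a b (\<lambda>A. f A w) (A + mscale t Y)) has_field_derivative
      (\<Sum>a\<in>UNIV. \<Sum>b\<in>UNIV. X$a$b * (\<Sum>c\<in>UNIV. \<Sum>d\<in>UNIV. Y$c$d * pd c d (pd a b (\<lambda>A. f A w)) A))) (at 0)"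
    by (intro DERIV_sum DERIV_cmult pd_deriv pd_polyfun F)
  then show ?thesis unfolding dirderiv_apply[of "\<lambda>A. dirderiv f A X"] e by (rule DERIV_imp_deriv)
qed

lemma swap4: "(\<Sum>a\<in>A. \<Sum>b\<in>B. \<Sum>c\<in>C. \<Sum>d\<in>D. g a b c d) = (\<Sum>c\<in>C. \<Sum>d\<in>D. \<Sum>a\<in>A. \<Sum>b\<in>B. g a b c d)"
proof -
  have i1: "(\<Sum>b\<in>B. \<Sum>c\<in>C. \<Sum>d\<in>D. g a b c d) = (\<Sum>c\<in>C. \<Sum>b\<in>B. \<Sum>d\<in>D. g a b c d)" for a
    by (rule sum.swap)
  have i2: "(\<Sum>b\<in>B. \<Sum>d\<in>D. g a b c d) = (\<Sum>d\<in>D. \<Sum>b\<in>B. g a b c d)" for a c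
    by (rule sum.swap)
  have "(\<Sum>a\<in>A. \<Sum>b\<in>B. \<Sum>c\<in>C. \<Sum>d\<in>D. g a b c d) = (\<Sum>a\<in>A. \<Sum>c\<in>C. \<Sum>d\<in>D. \<Sum>b\<in>B. g a b c d)"
    by (simp only: i1 i2)
  also have "\<dots> = (\<Sum>c\<in>C. \<Sum>a\<in>A. \<Sum>d\<in>D. \<Sum>b\<in>B. g a b c d)" by (rule sum.swap)
  also have "\<dots> = (\<Sum>c\<in>C. \<Sum>d\<in>D. \<Sum>a\<in>A. \<Sum>b\<in>B. g a b c d)" by (rule sum.cong[OF refl], rule sum.swap)
  finally show ?thesis .
qed

lemma dirderiv2_sym:
  assumes f: "pv f"
  shows "dirderiv (\<lambda>A. dirderiv f A X) A Y w = dirderiv (\<lambda>A. dirderiv f A Y) A X w"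
proof -
  have F: "(\<lambda>A. f A w) \<in> polyfun" using f unfolding pv_def by auto
  have "dirderiv (\<lambda>A. dirderiv f A X) A Y w = (\<Sum>a\<in>UNIV. \<Sum>b\<in>UNIV. \<Sum>c\<in>UNIV. \<Sum>d\<in>UNIV. X$a$b * Y$c$d * pd c d (pd a b (\<lambda>A. f A w)) A)"
    unfolding dirderiv2_eq[OF f] by (simp add: sum_distrib_left mult.assoc)
  also have "\<dots> = (\<Sum>c\<in>UNIV. \<Sum>d\<in>UNIV. \<Sum>a\<in>UNIV. \<Sum>b\<in>UNIV. X$a$b * Y$c$d * pd c d (pd a b (\<lambda>A. f A w)) A)"
    by (rule swap4)
  also have "\<dots> = dirderiv (\<lambda>A. dirderiv f A Y) A X w"
    unfolding dirderiv2_eq[OF f] sum_distrib_left by (intro sum.cong refl) (simp add: pd_comm[OF F] mult_ac)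
  finally show ?thesis .
qed

definition bil :: "(complex^'N^'N \<Rightarrow> complex^'N^'N \<Rightarrow> complex) \<Rightarrow> bool" where
  "bil \<beta> = (\<exists>K. \<forall>X Y. \<beta> X Y = (\<Sum>a\<in>UNIV. \<Sum>b\<in>UNIV. X$a$b * (\<Sum>c\<in>UNIV. \<Sum>d\<in>UNIV. Y$c$d * K a b c d)))"

lemma sd1: "(\<Sum>k\<in>(UNIV::'a::finite set). (if P \<and> k = x then g k else 0)) = (if P then g x else 0)"
  by (cases P) simp_all
lemma sd2: "(\<Sum>k\<in>(UNIV::'a::finite set). (if k = x \<and> P then g k else 0)) = (if P then g x else 0)"
  by (cases P) simp_all
lemma sd3: "(\<Sum>k\<in>(UNIV::'a::finite set). (if P \<and> x = k then g k else 0)) = (if P then g x else 0)"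
  by (cases P) simp_all
lemma sd4: "(\<Sum>k\<in>(UNIV::'a::finite set). (if x = k \<and> P then g k else 0)) = (if P then g x else 0)"
  by (cases P) simp_all

lemma casimir': "orthonormal_sl_basis b \<Longrightarrow> (\<Sum>p<CARD('N)^2 - 1. (b p)$a$c * (b p)$d$e) =
     (if a = e \<and> c = d then 1 else 0) - (if a = c \<and> d = e then 1 else 0) / of_nat CARD('N)"
  for b :: "nat \<Rightarrow> complex^'N^'N"
  by (simp only: casimir) (cases "a = c \<and> d = e"; simp)

lemma mm1: "(\<Sum>p\<in>P. (x p ** B)$a$c * (x p)$d$e) = (\<Sum>k\<in>UNIV. B$k$c * (\<Sum>p\<in>P. (x p)$a$k * (x p)$d$e))"
  for x :: "nat \<Rightarrow> complex^'N^'N"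
proof -
  have "(\<Sum>k\<in>UNIV. B$k$c * (\<Sum>p\<in>P. (x p)$a$k * (x p)$d$e)) = (\<Sum>k\<in>UNIV. \<Sum>p\<in>P. B$k$c * ((x p)$a$k * (x p)$d$e))"
    by (simp only: sum_distrib_left)
  also have "\<dots> = (\<Sum>p\<in>P. \<Sum>k\<in>UNIV. B$k$c * ((x p)$a$k * (x p)$d$e))" by (rule sum.swap)
  also have "\<dots> = (\<Sum>p\<in>P. (x p ** B)$a$c * (x p)$d$e)"
    by (simp add: matrix_matrix_mult_def sum_distrib_right sum_distrib_left, (intro sum.cong refl; simp add: mult_ac)?)
  finally show ?thesis by simp
qed
lemma mm2: "(\<Sum>p\<in>P. (B ** x p)$a$c * (x p)$d$e) = (\<Sum>k\<in>UNIV. B$a$k * (\<Sum>p\<in>P. (x p)$k$c * (x p)$d$e))"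
  for x :: "nat \<Rightarrow> complex^'N^'N"
proof -
  have "(\<Sum>k\<in>UNIV. B$a$k * (\<Sum>p\<in>P. (x p)$k$c * (x p)$d$e)) = (\<Sum>k\<in>UNIV. \<Sum>p\<in>P. B$a$k * ((x p)$k$c * (x p)$d$e))"
    by (simp only: sum_distrib_left)
  also have "\<dots> = (\<Sum>p\<in>P. \<Sum>k\<in>UNIV. B$a$k * ((x p)$k$c * (x p)$d$e))" by (rule sum.swap)
  also have "\<dots> = (\<Sum>p\<in>P. (B ** x p)$a$c * (x p)$d$e)"
    by (simp add: matrix_matrix_mult_def sum_distrib_right sum_distrib_left, (intro sum.cong refl; simp add: mult_ac)?)
  finally show ?thesis by simp
qed
lemma mm3: "(\<Sum>p\<in>P. (x p)$a$c * (B ** x p)$d$e) = (\<Sum>k\<in>UNIV. B$d$k * (\<Sum>p\<in>P. (x p)$a$c * (x p)$k$e))"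
  for x :: "nat \<Rightarrow> complex^'N^'N"
proof -
  have "(\<Sum>k\<in>UNIV. B$d$k * (\<Sum>p\<in>P. (x p)$a$c * (x p)$k$e)) = (\<Sum>k\<in>UNIV. \<Sum>p\<in>P. B$d$k * ((x p)$a$c * (x p)$k$e))"
    by (simp only: sum_distrib_left)
  also have "\<dots> = (\<Sum>p\<in>P. \<Sum>k\<in>UNIV. B$d$k * ((x p)$a$c * (x p)$k$e))" by (rule sum.swap)
  also have "\<dots> = (\<Sum>p\<in>P. (x p)$a$c * (B ** x p)$d$e)"
    by (simp add: matrix_matrix_mult_def sum_distrib_right sum_distrib_left, (intro sum.cong refl; simp add: mult_ac)?)
  finally show ?thesis by simp
qed
lemma mm4: "(\<Sum>p\<in>P. (x p)$a$c * (x p ** B)$d$e) = (\<Sum>k\<in>UNIV. B$k$e * (\<Sum>p\<in>P. (x p)$a$c * (x p)$d$k))"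
  for x :: "nat \<Rightarrow> complex^'N^'N"
proof -
  have "(\<Sum>k\<in>UNIV. B$k$e * (\<Sum>p\<in>P. (x p)$a$c * (x p)$d$k)) = (\<Sum>k\<in>UNIV. \<Sum>p\<in>P. B$k$e * ((x p)$a$c * (x p)$d$k))"
    by (simp only: sum_distrib_left)
  also have "\<dots> = (\<Sum>p\<in>P. \<Sum>k\<in>UNIV. B$k$e * ((x p)$a$c * (x p)$d$k))" by (rule sum.swap)
  also have "\<dots> = (\<Sum>p\<in>P. (x p)$a$c * (x p ** B)$d$e)"
    by (simp add: matrix_matrix_mult_def sum_distrib_right sum_distrib_left, (intro sum.cong refl; simp add: mult_ac)?)
  finally show ?thesis by simp
qed

lemma casimir_comm:
  fixes b :: "nat \<Rightarrow> complex^'N^'N"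
  assumes ob: "orthonormal_sl_basis b"
  shows "(\<Sum>p<CARD('N)^2 - 1. (b p ** B - B ** b p)$a$c * (b p)$d$e) =
         (\<Sum>p<CARD('N)^2 - 1. (b p)$a$c * (B ** b p - b p ** B)$d$e)"
proof -
  let ?P = "{..<CARD('N)^2 - 1}"
  let ?N = "of_nat CARD('N) :: complex"
  note cs = casimir'[OF ob]
  have P1: "(\<Sum>p\<in>?P. (b p ** B)$a$c * (b p)$d$e) = (if a = e then B$d$c else 0) - (if d = e then B$a$c else 0) / ?N"
    unfolding mm1 cs by (simp add: right_diff_distrib sum_subtractf sum_divide_distrib[symmetric] sd1 sd2 sd3 sd4)
  have P2: "(\<Sum>p\<in>?P. (B ** b p)$a$c * (b p)$d$e) = (if c = d then B$a$e else 0) - (if d = e then B$a$c else 0) / ?N"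
    unfolding mm2 cs by (simp add: right_diff_distrib sum_subtractf sum_divide_distrib[symmetric] sd1 sd2 sd3 sd4)
  have P3: "(\<Sum>p\<in>?P. (b p)$a$c * (B ** b p)$d$e) = (if a = e then B$d$c else 0) - (if a = c then B$d$e else 0) / ?N"
    unfolding mm3 cs by (simp add: right_diff_distrib sum_subtractf sum_divide_distrib[symmetric] sd1 sd2 sd3 sd4)
  have P4: "(\<Sum>p\<in>?P. (b p)$a$c * (b p ** B)$d$e) = (if c = d then B$a$e else 0) - (if a = c then B$d$e else 0) / ?N"
    unfolding mm4 cs by (simp add: right_diff_distrib sum_subtractf sum_divide_distrib[symmetric] sd1 sd2 sd3 sd4)
  have "(\<Sum>p\<in>?P. (b p ** B - B ** b p)$a$c * (b p)$d$e) = (\<Sum>p\<in>?P. (b p ** B)$a$c * (b p)$d$e) - (\<Sum>p\<in>?P. (B ** b p)$a$c * (b p)$d$e)"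
    by (simp only: vector_minus_component left_diff_distrib sum_subtractf)
  moreover have "(\<Sum>p\<in>?P. (b p)$a$c * (B ** b p - b p ** B)$d$e) = (\<Sum>p\<in>?P. (b p)$a$c * (B ** b p)$d$e) - (\<Sum>p\<in>?P. (b p)$a$c * (b p ** B)$d$e)"
    by (simp only: vector_minus_component right_diff_distrib sum_subtractf)
  ultimately show ?thesis using P1 P2 P3 P4 by simp
qed

lemma bil_ex: "(\<Sum>p\<in>P. \<Sum>a\<in>UNIV. \<Sum>b\<in>UNIV. x p a b * (\<Sum>c\<in>UNIV. \<Sum>d\<in>UNIV. y p c d * K a b c d)) =
     (\<Sum>a\<in>UNIV. \<Sum>b\<in>UNIV. \<Sum>c\<in>UNIV. \<Sum>d\<in>UNIV. K a b c d * (\<Sum>p\<in>P. x p a b * y p c d))"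
  for x y :: "nat \<Rightarrow> 'a::finite \<Rightarrow> 'b::finite \<Rightarrow> complex" and K :: "'a \<Rightarrow> 'b \<Rightarrow> 'a \<Rightarrow> 'b \<Rightarrow> complex"
  by (simp add: sum_distrib_left sum_distrib_right sum.swap[of _ P] mult_ac)

lemma casimir_bil:
  fixes b :: "nat \<Rightarrow> complex^'N^'N"
  assumes ob: "orthonormal_sl_basis b" and bl: "bil \<beta>"
  shows "(\<Sum>p<CARD('N)^2 - 1. \<beta> (b p ** B - B ** b p) (b p)) = (\<Sum>p<CARD('N)^2 - 1. \<beta> (b p) (B ** b p - b p ** B))"
proof -
  obtain K where K: "\<And>X Y. \<beta> X Y = (\<Sum>a\<in>UNIV. \<Sum>b\<in>UNIV. X$a$b * (\<Sum>c\<in>UNIV. \<Sum>d\<in>UNIV. Y$c$d * K a b c d))"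
    using bl unfolding bil_def by blast
  show ?thesis unfolding K bil_ex using casimir_comm[OF ob] by simp
qed



lemma VN_pv: "f \<in> VN \<Longrightarrow> pv f" by (simp add: VN_def pv_def)

lemma VN_inv: "f \<in> VN \<Longrightarrow> A \<in> sl \<Longrightarrow> B \<in> sl \<Longrightarrow>
   dirderiv f A (B ** A - A ** B) w = (\<Sum>i\<in>UNIV. act_on B i (f A) w)"
  unfolding VN_def by (simp add: sum_fun_apply)

lemma VN_intro: "pv g \<Longrightarrow> (\<And>A B w. A \<in> sl \<Longrightarrow> B \<in> sl \<Longrightarrow>
   dirderiv g A (B ** A - A ** B) w = (\<Sum>i\<in>UNIV. act_on B i (g A) w)) \<Longrightarrow> g \<in> VN"
  unfolding VN_def pv_def by (auto intro!: ext simp: sum_fun_apply)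

lemma sl_add: "A \<in> sl \<Longrightarrow> C \<in> sl \<Longrightarrow> A + mscale t C \<in> sl"
  unfolding sl_def mtr_def by (simp add: sum.distrib sum_distrib_left[symmetric])

lemma comm_lin: "B ** (A + mscale t Y) - (A + mscale t Y) ** B = (B ** A - A ** B) + mscale t (B ** Y - Y ** B)"
  by (simp add: vec_eq_iff matrix_matrix_mult_def algebra_simps sum.distrib sum_subtractf sum_distrib_left)

lemma DI:
  assumes f: "f \<in> VN" and A: "A \<in> sl" and B: "B \<in> sl" and Y: "Y \<in> sl"
  shows "dirderiv f A (B ** Y - Y ** B) w + dirderiv (\<lambda>A'. dirderiv f A' (B ** A - A ** B)) A Y w
      = (\<Sum>j\<in>UNIV. act_on B j (dirderiv f A Y) w)"
proof -
  have pf: "pv f" using f by (rule VN_pv)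
  define C where "C = B ** A - A ** B"
  define D where "D = B ** Y - Y ** B"
  have eq: "(\<lambda>t. dirderiv f (A + mscale t Y) C w + t * dirderiv f (A + mscale t Y) D w)
     = (\<lambda>t. \<Sum>j\<in>UNIV. \<Sum>k\<in>UNIV. B$(w j)$k * f (A + mscale t Y) (w(j := k)))"
  proof
    fix t
    have "A + mscale t Y \<in> sl" using A Y by (rule sl_add)
    then have "dirderiv f (A + mscale t Y) (B ** (A + mscale t Y) - (A + mscale t Y) ** B) w
        = (\<Sum>j\<in>UNIV. act_on B j (f (A + mscale t Y)) w)" using VN_inv[OF f _ B] by blast
    then show "dirderiv f (A + mscale t Y) C w + t * dirderiv f (A + mscale t Y) D w
     = (\<Sum>j\<in>UNIV. \<Sum>k\<in>UNIV. B$(w j)$k * f (A + mscale t Y) (w(j := k)))"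
      unfolding comm_lin dirderiv_add_dir[OF pf] C_def D_def by (simp add: act_on_def)
  qed
  have h1: "((\<lambda>t. dirderiv f (A + mscale t Y) C w) has_field_derivative dirderiv (\<lambda>A'. dirderiv f A' C) A Y w) (at 0)"
    by (rule dirderiv_has[OF pv_dirderiv[OF pf]])
  have h2: "((\<lambda>t. dirderiv f (A + mscale t Y) D w) has_field_derivative dirderiv (\<lambda>A'. dirderiv f A' D) A Y w) (at 0)"
    by (rule dirderiv_has[OF pv_dirderiv[OF pf]])
  have "((\<lambda>t. t * dirderiv f (A + mscale t Y) D w) has_field_derivative
      1 * dirderiv f (A + mscale 0 Y) D w + dirderiv (\<lambda>A'. dirderiv f A' D) A Y w * 0) (at 0)"
    by (rule DERIV_mult[OF DERIV_ident h2])
  then have h3: "((\<lambda>t. t * dirderiv f (A + mscale t Y) D w) has_field_derivative dirderiv f A D w) (at 0)" by simp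
  have d1: "((\<lambda>t. dirderiv f (A + mscale t Y) C w + t * dirderiv f (A + mscale t Y) D w) has_field_derivative
      (dirderiv (\<lambda>A'. dirderiv f A' C) A Y w + dirderiv f A D w)) (at 0)"
    by (rule DERIV_add[OF h1 h3])
  have d2: "((\<lambda>t. \<Sum>j\<in>UNIV. \<Sum>k\<in>UNIV. B$(w j)$k * f (A + mscale t Y) (w(j := k))) has_field_derivative
      (\<Sum>j\<in>UNIV. \<Sum>k\<in>UNIV. B$(w j)$k * dirderiv f A Y (w(j := k)))) (at 0)"
    by (intro DERIV_sum DERIV_cmult dirderiv_has[OF pf])
  have "dirderiv (\<lambda>A'. dirderiv f A' C) A Y w + dirderiv f A D w = (\<Sum>j\<in>UNIV. \<Sum>k\<in>UNIV. B$(w j)$k * dirderiv f A Y (w(j := k)))"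
    using DERIV_unique[OF d1[unfolded eq] d2] .
  then show ?thesis unfolding C_def D_def by (simp add: act_on_def add.commute)
qed


lemma pv_Pop: "pv f \<Longrightarrow> pv (Pop \<sigma> f)"
  unfolding pv_def Pop_def perm_act_def by simp

lemma dirderiv_Pop: "dirderiv (Pop \<sigma> f) A C w = dirderiv f A C (w \<circ> \<sigma>)"
  by (simp add: dirderiv_def Pop_def perm_act_def)

lemma Pop_VN:
  fixes f :: "complex^'N^'N \<Rightarrow> ('n::finite \<Rightarrow> 'N) \<Rightarrow> complex"
  assumes f: "f \<in> VN" and s: "\<sigma> permutes (UNIV :: 'n set)"
  shows "Pop \<sigma> f \<in> VN"
proof (rule VN_intro[OF pv_Pop[OF VN_pv[OF f]]])
  fix A B :: "complex^'N^'N" and w :: "'n \<Rightarrow> 'N" assume A: "A \<in> sl" and B: "B \<in> sl"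
  have bij: "bij \<sigma>" using s by (rule permutes_bij)
  have "(\<Sum>i\<in>UNIV. act_on B i (Pop \<sigma> f A) w) = (\<Sum>i\<in>UNIV. act_on B (inv \<sigma> i) (f A) (w \<circ> \<sigma>))"
    unfolding Pop_def perm_act_def by (simp add: act_on_perm[OF bij])
  also have "\<dots> = (\<Sum>i\<in>UNIV. act_on B i (f A) (w \<circ> \<sigma>))"
    using sum.permute[OF permutes_inv[OF s], of "\<lambda>i. act_on B i (f A) (w \<circ> \<sigma>)"] by (simp add: comp_def)
  also have "\<dots> = dirderiv f A (B ** A - A ** B) (w \<circ> \<sigma>)" using VN_inv[OF f A B] by simp
  finally show "dirderiv (Pop \<sigma> f) A (B ** A - A ** B) w = (\<Sum>i\<in>UNIV. act_on B i (Pop \<sigma> f A) w)"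
    by (simp add: dirderiv_Pop)
qed

lemma pv_Xop: "pv f \<Longrightarrow> pv (Xop i f)"
  unfolding pv_def Xop_def act_on_def by (auto intro!: pf_sum pf_mult pf_coord)

lemma dirderiv_Xop:
  assumes pf: "pv f"
  shows "dirderiv (Xop i f) A C w = act_on C i (f A) w + act_on A i (dirderiv f A C) w"
proof -
  have h: "(\<lambda>t. Xop i f (A + mscale t C) w) = (\<lambda>t. \<Sum>k\<in>UNIV. (A + mscale t C)$(w i)$k * f (A + mscale t C) (w(i:=k)))"
    by (simp add: Xop_def act_on_def)
  have d: "((\<lambda>t. \<Sum>k\<in>UNIV. (A + mscale t C)$(w i)$k * f (A + mscale t C) (w(i:=k))) has_field_derivative
     (\<Sum>k\<in>UNIV. C$(w i)$k * f (A + mscale 0 C) (w(i:=k)) + dirderiv f A C (w(i:=k)) * (A + mscale 0 C)$(w i)$k)) (at 0)"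
  proof (rule DERIV_sum)
    fix k
    have "((\<lambda>t. A$(w i)$k + t * C$(w i)$k) has_field_derivative C$(w i)$k) (at 0)"
      by (auto intro!: derivative_eq_intros)
    then have c: "((\<lambda>t. (A + mscale t C)$(w i)$k) has_field_derivative C$(w i)$k) (at 0)" by simp
    show "((\<lambda>t. (A + mscale t C)$(w i)$k * f (A + mscale t C) (w(i:=k))) has_field_derivative
     C$(w i)$k * f (A + mscale 0 C) (w(i:=k)) + dirderiv f A C (w(i:=k)) * (A + mscale 0 C)$(w i)$k) (at 0)"
      by (rule DERIV_mult[OF c dirderiv_has[OF pf]])
  qed
  have "dirderiv (Xop i f) A C w = (\<Sum>k\<in>UNIV. C$(w i)$k * f (A + mscale 0 C) (w(i:=k)) + dirderiv f A C (w(i:=k)) * (A + mscale 0 C)$(w i)$k)"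
    unfolding dirderiv_apply[of "Xop i f"] h using d by (rule DERIV_imp_deriv)
  then show ?thesis by (simp add: act_on_def sum.distrib mult.commute)
qed

lemma Xop_VN:
  fixes f :: "complex^'N^'N \<Rightarrow> ('n::finite \<Rightarrow> 'N::finite) \<Rightarrow> complex"
  assumes f: "f \<in> VN"
  shows "Xop i f \<in> VN"
proof (rule VN_intro[OF pv_Xop[OF VN_pv[OF f]]])
  fix A B :: "complex^'N^'N" and w :: "'n \<Rightarrow> 'N" assume A: "A \<in> sl" and B: "B \<in> sl"
  have pf: "pv f" using f by (rule VN_pv)
  have e1: "dirderiv f A (B ** A - A ** B) = (\<lambda>u. \<Sum>j\<in>UNIV. act_on B j (f A) u)"
    by (rule ext) (rule VN_inv[OF f A B])
  have "dirderiv (Xop i f) A (B ** A - A ** B) w =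
     act_on (B ** A - A ** B) i (f A) w + (\<Sum>j\<in>UNIV. act_on A i (act_on B j (f A)) w)"
    unfolding dirderiv_Xop[OF pf] e1 act_on_sumv ..
  also have "\<dots> = act_on (B ** A - A ** B) i (f A) w + ((\<Sum>j\<in>UNIV. act_on B j (act_on A i (f A)) w) + act_on (A ** B - B ** A) i (f A) w)"
    by (simp only: act_on_sum_comm)
  also have "\<dots> = (\<Sum>j\<in>UNIV. act_on B j (act_on A i (f A)) w)"
    by (simp add: act_on_diffM)
  finally show "dirderiv (Xop i f) A (B ** A - A ** B) w = (\<Sum>j\<in>UNIV. act_on B j (Xop i f A) w)"
    by (simp add: Xop_def)
qed


lemma Yop_eq: "Yop b i f A w = (of_nat CARD('N) / of_nat CARD('n)) *
   (\<Sum>p\<in>{..<CARD('N)^2 - 1}. act_on (b p) i (dirderiv f A (b p)) w)"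
  for f :: "complex^'N^'N \<Rightarrow> ('n \<Rightarrow> 'N) \<Rightarrow> complex"
  by (simp only: Yop_def sum_fun_apply)

lemma pv_Yop:
  fixes f :: "complex^'N^'N \<Rightarrow> ('n \<Rightarrow> 'N) \<Rightarrow> complex"
  assumes pf: "pv f"
  shows "pv (Yop b i f)"
  unfolding pv_def
proof
  fix w :: "'n \<Rightarrow> 'N"
  have dp: "(\<lambda>A. dirderiv f A X u) \<in> polyfun" for X u using pv_dirderiv[OF pf] unfolding pv_def by blast
  have "(\<lambda>A. Yop b i f A w) = (\<lambda>A. (of_nat CARD('N) / of_nat CARD('n)) *
     (\<Sum>p\<in>{..<CARD('N)^2 - 1}. \<Sum>k\<in>UNIV. (b p)$(w i)$k * dirderiv f A (b p) (w(i:=k))))"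
    by (simp only: Yop_eq act_on_def)
  also have "\<dots> \<in> polyfun"
    by (intro pf_cmult pf_sum dp) auto
  finally show "(\<lambda>A. Yop b i f A w) \<in> polyfun" .
qed

lemma dirderiv_Yop:
  fixes f :: "complex^'N^'N \<Rightarrow> ('n \<Rightarrow> 'N) \<Rightarrow> complex"
  assumes pf: "pv f"
  shows "dirderiv (Yop b i f) A C w = (of_nat CARD('N) / of_nat CARD('n)) *
     (\<Sum>p\<in>{..<CARD('N)^2 - 1}. act_on (b p) i (dirderiv (\<lambda>A. dirderiv f A (b p)) A C) w)"
proof -
  have h: "(\<lambda>t. Yop b i f (A + mscale t C) w) = (\<lambda>t. (of_nat CARD('N) / of_nat CARD('n)) *
     (\<Sum>p\<in>{..<CARD('N)^2 - 1}. \<Sum>k\<in>UNIV. (b p)$(w i)$k * dirderiv f (A + mscale t C) (b p) (w(i:=k))))"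
    by (simp only: Yop_eq act_on_def)
  have d: "((\<lambda>t. (of_nat CARD('N) / of_nat CARD('n)) *
     (\<Sum>p\<in>{..<CARD('N)^2 - 1}. \<Sum>k\<in>UNIV. (b p)$(w i)$k * dirderiv f (A + mscale t C) (b p) (w(i:=k))))
     has_field_derivative (of_nat CARD('N) / of_nat CARD('n)) *
     (\<Sum>p\<in>{..<CARD('N)^2 - 1}. \<Sum>k\<in>UNIV. (b p)$(w i)$k * dirderiv (\<lambda>A. dirderiv f A (b p)) A C (w(i:=k)))) (at 0)"
    by (intro DERIV_cmult DERIV_sum dirderiv_has[OF pv_dirderiv[OF pf]])
  show ?thesis unfolding dirderiv_apply[of "Yop b i f"] h DERIV_imp_deriv[OF d]
    by (simp only: act_on_def)
qed

lemma bil_act: "pv f \<Longrightarrow> bil (\<lambda>X Y. act_on X i (dirderiv f A Y) w)"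
proof -
  assume pf: "pv f"
  have e: "dirderiv f A Y = (\<lambda>u. \<Sum>c\<in>UNIV. \<Sum>d\<in>UNIV. Y$c$d * dirderiv f A (Emat c d) u)" for Y
    by (rule ext) (rule dirderiv_lin[OF pf])
  show ?thesis unfolding bil_def
  proof (rule exI[of _ "\<lambda>a b c d. act_on (Emat a b) i (dirderiv f A (Emat c d)) w"], intro allI)
    fix X Y
    show "act_on X i (dirderiv f A Y) w = (\<Sum>a\<in>UNIV. \<Sum>b\<in>UNIV. X$a$b * (\<Sum>c\<in>UNIV. \<Sum>d\<in>UNIV. Y$c$d *
        act_on (Emat a b) i (dirderiv f A (Emat c d)) w))"
    proof -
      have "act_on X i (dirderiv f A Y) w = (\<Sum>a\<in>UNIV. \<Sum>b\<in>UNIV. X$a$b * act_on (Emat a b) i (dirderiv f A Y) w)"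
        by (rule act_on_Emat)
      also have "\<dots> = (\<Sum>a\<in>UNIV. \<Sum>b\<in>UNIV. X$a$b * (\<Sum>c\<in>UNIV. \<Sum>d\<in>UNIV. Y$c$d *
        act_on (Emat a b) i (dirderiv f A (Emat c d)) w))"
        unfolding e[of Y] by (simp only: act_on_sumv act_on_cmultv)
      finally show ?thesis .
    qed
  qed
qed

lemma bil_H: "pv f \<Longrightarrow> bil (\<lambda>X Y. dirderiv (\<lambda>A. dirderiv f A X) A Y w)"
  unfolding bil_def dirderiv2_eq
  by (rule exI[of _ "\<lambda>a b c d. pd c d (pd a b (\<lambda>A. f A w)) A"]) simp


lemma Yop_VN:
  fixes f :: "complex^'N^'N \<Rightarrow> ('n::finite \<Rightarrow> 'N::finite) \<Rightarrow> complex" and b :: "nat \<Rightarrow> complex^'N^'N"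
  assumes f: "f \<in> VN" and ob: "orthonormal_sl_basis b"
  shows "Yop b i f \<in> VN"
proof (rule VN_intro[OF pv_Yop[OF VN_pv[OF f]]])
  fix A B :: "complex^'N^'N" and w :: "'n \<Rightarrow> 'N" assume A: "A \<in> sl" and B: "B \<in> sl"
  have pf: "pv f" using f by (rule VN_pv)
  define P where "P = {..<CARD('N)^2 - 1}"
  define c where "c = (of_nat CARD('N) / of_nat CARD('n) :: complex)"
  define C where "C = B ** A - A ** B"
  have bsl: "b p \<in> sl" if "p \<in> P" for p using ob that unfolding orthonormal_sl_basis_def P_def by auto
  have s1: "dirderiv (\<lambda>A. dirderiv f A (b p)) A C = (\<lambda>u. (\<Sum>j\<in>UNIV. act_on B j (dirderiv f A (b p)) u) - dirderiv f A (B ** b p - b p ** B) u)"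
    if "p \<in> P" for p
  proof
    fix u
    have "dirderiv (\<lambda>A. dirderiv f A (b p)) A C u = dirderiv (\<lambda>A. dirderiv f A C) A (b p) u"
      by (rule dirderiv2_sym[OF pf])
    also have "\<dots> = (\<Sum>j\<in>UNIV. act_on B j (dirderiv f A (b p)) u) - dirderiv f A (B ** b p - b p ** B) u"
      using DI[OF f A B bsl[OF that], of u] unfolding C_def by (simp add: eq_diff_eq add.commute)
    finally show "dirderiv (\<lambda>A. dirderiv f A (b p)) A C u = (\<Sum>j\<in>UNIV. act_on B j (dirderiv f A (b p)) u) - dirderiv f A (B ** b p - b p ** B) u" .
  qed
  have L: "act_on (b p) i (dirderiv (\<lambda>A. dirderiv f A (b p)) A C) w =
     (\<Sum>j\<in>UNIV. act_on B j (act_on (b p) i (dirderiv f A (b p))) w) + act_on (b p ** B - B ** b p) i (dirderiv f A (b p)) w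
     - act_on (b p) i (dirderiv f A (B ** b p - b p ** B)) w" if "p \<in> P" for p
    unfolding s1[OF that] by (simp only: act_on_diffv act_on_sumv act_on_sum_comm)
  have LHS: "dirderiv (Yop b i f) A C w = c * (\<Sum>p\<in>P. act_on (b p) i (dirderiv (\<lambda>A. dirderiv f A (b p)) A C) w)"
    unfolding dirderiv_Yop[OF pf] c_def P_def ..
  have eY: "Yop b i f A = (\<lambda>u. c * (\<Sum>p\<in>P. act_on (b p) i (dirderiv f A (b p)) u))"
    by (rule ext) (simp only: Yop_eq c_def P_def)
  have "(\<Sum>j\<in>UNIV. act_on B j (Yop b i f A) w) = (\<Sum>j\<in>UNIV. c * (\<Sum>p\<in>P. act_on B j (act_on (b p) i (dirderiv f A (b p))) w))"
    unfolding eY by (simp only: act_on_cmultv act_on_sumv)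
  also have "\<dots> = c * (\<Sum>j\<in>UNIV. \<Sum>p\<in>P. act_on B j (act_on (b p) i (dirderiv f A (b p))) w)"
    by (simp only: sum_distrib_left)
  also have "\<dots> = c * (\<Sum>p\<in>P. \<Sum>j\<in>UNIV. act_on B j (act_on (b p) i (dirderiv f A (b p))) w)"
    by (simp only: sum.swap[of _ P])
  finally have R: "(\<Sum>j\<in>UNIV. act_on B j (Yop b i f A) w) = c * (\<Sum>p\<in>P. \<Sum>j\<in>UNIV. act_on B j (act_on (b p) i (dirderiv f A (b p))) w)" .
  have cas: "(\<Sum>p\<in>P. act_on (b p ** B - B ** b p) i (dirderiv f A (b p)) w) = (\<Sum>p\<in>P. act_on (b p) i (dirderiv f A (B ** b p - b p ** B)) w)"
    using casimir_bil[OF ob bil_act[OF pf, of i A w], of B] unfolding P_def by (simp only:)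
  have "(\<Sum>p\<in>P. act_on (b p) i (dirderiv (\<lambda>A. dirderiv f A (b p)) A C) w) =
     (\<Sum>p\<in>P. (\<Sum>j\<in>UNIV. act_on B j (act_on (b p) i (dirderiv f A (b p))) w) + act_on (b p ** B - B ** b p) i (dirderiv f A (b p)) w
     - act_on (b p) i (dirderiv f A (B ** b p - b p ** B)) w)"
    by (rule sum.cong[OF refl]) (rule L)
  also have "\<dots> = (\<Sum>p\<in>P. \<Sum>j\<in>UNIV. act_on B j (act_on (b p) i (dirderiv f A (b p))) w)"
    by (simp only: sum_subtractf sum.distrib cas add_diff_cancel)
  finally show "dirderiv (Yop b i f) A (B ** A - A ** B) w = (\<Sum>j\<in>UNIV. act_on B j (Yop b i f A) w)"
    unfolding C_def[symmetric] LHS R by simp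
qed

lemma sumY:
  fixes f :: "complex^'N^'N \<Rightarrow> ('n::finite \<Rightarrow> 'N::finite) \<Rightarrow> complex" and b :: "nat \<Rightarrow> complex^'N^'N"
  assumes f: "f \<in> VN" and ob: "orthonormal_sl_basis b" and A: "A \<in> sl"
  shows "(\<Sum>i\<in>UNIV. Yop b i f) A w = 0"
proof -
  have pf: "pv f" using f by (rule VN_pv)
  define P where "P = {..<CARD('N)^2 - 1}"
  define c where "c = (of_nat CARD('N) / of_nat CARD('n) :: complex)"
  define \<beta> where "\<beta> X Y = dirderiv (\<lambda>A'. dirderiv f A' X) A Y w" for X Y
  have bsl: "b p \<in> sl" if "p \<in> P" for p using ob that unfolding orthonormal_sl_basis_def P_def by auto
  have "(\<Sum>i\<in>UNIV. Yop b i f) A w = (\<Sum>i\<in>UNIV. c * (\<Sum>p\<in>P. act_on (b p) i (dirderiv f A (b p)) w))"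
    by (simp only: sum_fun_apply Yop_eq c_def P_def)
  also have "\<dots> = c * (\<Sum>p\<in>P. \<Sum>i\<in>UNIV. act_on (b p) i (dirderiv f A (b p)) w)"
    by (simp only: sum_distrib_left[symmetric] sum.swap[of _ P])
  also have "\<dots> = c * (\<Sum>p\<in>P. \<beta> (b p ** A - A ** b p) (b p))"
  proof -
    have "(\<Sum>i\<in>UNIV. act_on (b p) i (dirderiv f A (b p)) w) = \<beta> (b p ** A - A ** b p) (b p)" if "p \<in> P" for p
      using DI[OF f A bsl[OF that] bsl[OF that], of w] by (simp add: \<beta>_def dirderiv_zero_dir[OF pf])
    then show ?thesis by simp
  qed
  also have "(\<Sum>p\<in>P. \<beta> (b p ** A - A ** b p) (b p)) = 0"
  proof -
    have neg: "\<beta> (- X) Y = - \<beta> X Y" for X Y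
      unfolding \<beta>_def dirderiv2_eq[OF pf] by (simp add: sum_negf)
    have cas: "(\<Sum>p\<in>P. \<beta> (b p ** A - A ** b p) (b p)) = (\<Sum>p\<in>P. \<beta> (b p) (A ** b p - b p ** A))"
      using casimir_bil[OF ob bil_H[OF pf, of A w], of A] unfolding P_def \<beta>_def by (simp only:)
    have "\<beta> (b p) (A ** b p - b p ** A) = - \<beta> (b p ** A - A ** b p) (b p)" for p
    proof -
      have 1: "\<beta> (b p) (A ** b p - b p ** A) = \<beta> (A ** b p - b p ** A) (b p)"
        unfolding \<beta>_def by (rule dirderiv2_sym[OF pf])
      have 2: "A ** b p - b p ** A = - (b p ** A - A ** b p)" by simp
      show ?thesis using 1 by (simp only: 2 neg)
    qed
    then have "(\<Sum>p\<in>P. \<beta> (b p) (A ** b p - b p ** A)) = - (\<Sum>p\<in>P. \<beta> (b p ** A - A ** b p) (b p))"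
      by (simp add: sum_negf)
    then have "(\<Sum>p\<in>P. \<beta> (b p ** A - A ** b p) (b p)) = - (\<Sum>p\<in>P. \<beta> (b p ** A - A ** b p) (b p))"
      using cas by simp
    then show ?thesis by simp
  qed
  finally show ?thesis by simp
qed


lemma YY_expand:
  fixes f :: "complex^'N^'N \<Rightarrow> ('n::finite \<Rightarrow> 'N::finite) \<Rightarrow> complex" and b :: "nat \<Rightarrow> complex^'N^'N"
  assumes pf: "pv f"
  shows "Yop b i (Yop b j f) A w = (of_nat CARD('N) / of_nat CARD('n)) * (\<Sum>p\<in>{..<CARD('N)^2 - 1}.
     (of_nat CARD('N) / of_nat CARD('n)) * (\<Sum>q\<in>{..<CARD('N)^2 - 1}.
       act_on (b p) i (act_on (b q) j (dirderiv (\<lambda>A. dirderiv f A (b q)) A (b p))) w))"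
proof -
  have dY: "dirderiv (Yop b j f) A X = (\<lambda>u. (of_nat CARD('N) / of_nat CARD('n)) *
     (\<Sum>q\<in>{..<CARD('N)^2 - 1}. act_on (b q) j (dirderiv (\<lambda>A. dirderiv f A (b q)) A X) u))" for X
    by (rule ext) (rule dirderiv_Yop[OF pf])
  show ?thesis by (simp only: Yop_eq dY act_on_cmultv act_on_sumv)
qed

lemma YY:
  fixes f :: "complex^'N^'N \<Rightarrow> ('n::finite \<Rightarrow> 'N::finite) \<Rightarrow> complex" and b :: "nat \<Rightarrow> complex^'N^'N"
  assumes pf: "pv f" and ij: "i \<noteq> j"
  shows "Yop b i (Yop b j f) A w = Yop b j (Yop b i f) A w"
proof -
  define P where "P = {..<CARD('N)^2 - 1}"
  define c where "c = (of_nat CARD('N) / of_nat CARD('n) :: complex)"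
  define T where "T p q = act_on (b p) i (act_on (b q) j (dirderiv (\<lambda>A. dirderiv f A (b q)) A (b p))) w" for p q
  have sw: "act_on (b q) j (act_on (b p) i (dirderiv (\<lambda>A. dirderiv f A (b p)) A (b q))) w = T p q" for p q
  proof -
    have "dirderiv (\<lambda>A. dirderiv f A (b p)) A (b q) = dirderiv (\<lambda>A. dirderiv f A (b q)) A (b p)"
      by (rule ext) (rule dirderiv2_sym[OF pf])
    then show ?thesis unfolding T_def using act_on_comm[OF ij] by metis
  qed
  have "Yop b i (Yop b j f) A w = c * (\<Sum>p\<in>P. c * (\<Sum>q\<in>P. T p q))"
    unfolding YY_expand[OF pf] c_def P_def T_def ..
  also have "\<dots> = c * (c * (\<Sum>p\<in>P. \<Sum>q\<in>P. T p q))"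
    by (simp only: sum_distrib_left[symmetric])
  also have "\<dots> = c * (c * (\<Sum>q\<in>P. \<Sum>p\<in>P. T p q))"
    by (subst sum.swap) (rule refl)
  also have "\<dots> = c * (\<Sum>q\<in>P. c * (\<Sum>p\<in>P. T p q))"
    by (simp only: sum_distrib_left[symmetric])
  also have "\<dots> = Yop b j (Yop b i f) A w"
    unfolding YY_expand[OF pf] c_def P_def sw ..
  finally show ?thesis .
qed

lemma cas_swap:
  fixes b :: "nat \<Rightarrow> complex^'N^'N" and v :: "('n \<Rightarrow> 'N) \<Rightarrow> complex"
  assumes ob: "orthonormal_sl_basis b" and ij: "i \<noteq> j"
  shows "(\<Sum>p\<in>{..<CARD('N)^2 - 1}. act_on (b p) j (act_on (b p) i v) w) =
     v (w \<circ> Transposition.transpose i j) - v w / of_nat CARD('N)"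
proof -
  define P where "P = {..<CARD('N)^2 - 1}"
  have "(\<Sum>p\<in>P. act_on (b p) j (act_on (b p) i v) w) =
     (\<Sum>p\<in>P. \<Sum>k\<in>UNIV. \<Sum>l\<in>UNIV. (b p)$(w j)$k * (b p)$(w i)$l * v (w(j := k, i := l)))"
    using ij by (simp add: act_on_def sum_distrib_left mult.assoc)
  also have "\<dots> = (\<Sum>k\<in>UNIV. \<Sum>l\<in>UNIV. (\<Sum>p\<in>P. (b p)$(w j)$k * (b p)$(w i)$l) * v (w(j := k, i := l)))"
    by (simp only: sum_distrib_right sum.swap[of _ _ P])
  also have "\<dots> = (\<Sum>k\<in>UNIV. \<Sum>l\<in>UNIV. ((if w j = l \<and> k = w i then 1 else 0) - (if w j = k \<and> w i = l then 1 else 0) / of_nat CARD('N)) * v (w(j := k, i := l)))"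
    unfolding P_def casimir'[OF ob] ..
  also have "\<dots> = v (w(j := w i, i := w j)) - v w / of_nat CARD('N)"
    by (simp add: left_diff_distrib sum_subtractf sum_divide_distrib[symmetric] sd1 sd2 sd3 sd4)
  also have "w(j := w i, i := w j) = w \<circ> Transposition.transpose i j"
    using ij by (auto simp: fun_eq_iff Transposition.transpose_def)
  finally show ?thesis unfolding P_def .
qed

lemma XY:
  fixes f :: "complex^'N^'N \<Rightarrow> ('n::finite \<Rightarrow> 'N::finite) \<Rightarrow> complex" and b :: "nat \<Rightarrow> complex^'N^'N"
  assumes pf: "pv f" and ob: "orthonormal_sl_basis b" and ij: "i \<noteq> j"
  shows "Xop i (Yop b j f) A w - Yop b j (Xop i f) A w =
     (1 / of_nat CARD('n)) * f A w - (of_nat CARD('N) / of_nat CARD('n)) * f A (w \<circ> Transposition.transpose i j)"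
proof -
  define P where "P = {..<CARD('N)^2 - 1}"
  define c where "c = (of_nat CARD('N) / of_nat CARD('n) :: complex)"
  have eY: "Yop b j f A = (\<lambda>u. c * (\<Sum>p\<in>P. act_on (b p) j (dirderiv f A (b p)) u))"
    by (rule ext) (simp only: Yop_eq c_def P_def)
  have dX: "dirderiv (Xop i f) A X = (\<lambda>u. act_on X i (f A) u + act_on A i (dirderiv f A X) u)" for X
    by (rule ext) (rule dirderiv_Xop[OF pf])
  have l: "Xop i (Yop b j f) A w = c * (\<Sum>p\<in>P. act_on A i (act_on (b p) j (dirderiv f A (b p))) w)"
    unfolding Xop_def eY by (simp only: act_on_cmultv act_on_sumv)
  have r: "Yop b j (Xop i f) A w = c * (\<Sum>p\<in>P. act_on (b p) j (act_on (b p) i (f A)) w + act_on A i (act_on (b p) j (dirderiv f A (b p))) w)"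
    unfolding Yop_eq dX c_def P_def act_on_addv act_on_comm[OF ij[symmetric], of "b p" for p] ..
  have "Xop i (Yop b j f) A w - Yop b j (Xop i f) A w = - c * (\<Sum>p\<in>P. act_on (b p) j (act_on (b p) i (f A)) w)"
    unfolding l r by (simp add: sum.distrib algebra_simps)
  also have "\<dots> = - c * (f A (w \<circ> Transposition.transpose i j) - f A w / of_nat CARD('N))"
    unfolding P_def cas_swap[OF ob ij] ..
  also have "\<dots> = (1 / of_nat CARD('n)) * f A w - (of_nat CARD('N) / of_nat CARD('n)) * f A (w \<circ> Transposition.transpose i j)"
    unfolding c_def by (simp add: field_simps)
  finally show ?thesis .
qed

lemma XX:
  "Xop i (Xop j f) A w = Xop j (Xop i f) A w"
  by (cases "i = j") (simp_all add: Xop_def act_on_comm)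

lemma conjX:
  fixes f :: "complex^'N^'N \<Rightarrow> ('n \<Rightarrow> 'N) \<Rightarrow> complex"
  assumes s: "\<sigma> permutes UNIV"
  shows "Pop \<sigma> (Xop i (Pop (inv \<sigma>) f)) A = Xop (\<sigma> i) f A"
proof
  fix w :: "'n \<Rightarrow> 'N"
  have bij: "bij \<sigma>" using s by (rule permutes_bij)
  have bi: "bij (inv \<sigma>)" using bij by (rule bij_imp_bij_inv)
  have ii: "inv (inv \<sigma>) = \<sigma>" using bij by (rule inv_inv_eq)
  have ww: "w \<circ> \<sigma> \<circ> inv \<sigma> = w" using bij by (simp add: fun_eq_iff bij_is_surj surj_f_inv_f)
  show "Pop \<sigma> (Xop i (Pop (inv \<sigma>) f)) A w = Xop (\<sigma> i) f A w"
    unfolding Pop_def perm_act_def Xop_def using act_on_perm[OF bi, of A i "f A" "w \<circ> \<sigma>"] ii ww by simp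
qed

lemma conjY:
  fixes f :: "complex^'N^'N \<Rightarrow> ('n \<Rightarrow> 'N) \<Rightarrow> complex"
  assumes s: "\<sigma> permutes UNIV"
  shows "Pop \<sigma> (Yop b i (Pop (inv \<sigma>) f)) A = Yop b (\<sigma> i) f A"
proof
  fix w :: "'n \<Rightarrow> 'N"
  have bij: "bij \<sigma>" using s by (rule permutes_bij)
  have bi: "bij (inv \<sigma>)" using bij by (rule bij_imp_bij_inv)
  have ii: "inv (inv \<sigma>) = \<sigma>" using bij by (rule inv_inv_eq)
  have ww: "w \<circ> \<sigma> \<circ> inv \<sigma> = w" using bij by (simp add: fun_eq_iff bij_is_surj surj_f_inv_f)
  have dP: "dirderiv (Pop (inv \<sigma>) f) A X = (\<lambda>u. dirderiv f A X (u \<circ> inv \<sigma>))" for X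
    by (rule ext) (rule dirderiv_Pop)
  have "act_on (b p) i (dirderiv (Pop (inv \<sigma>) f) A (b p)) (w \<circ> \<sigma>) = act_on (b p) (\<sigma> i) (dirderiv f A (b p)) w" for p
    unfolding dP using act_on_perm[OF bi, of "b p" i "dirderiv f A (b p)" "w \<circ> \<sigma>"] ii ww by simp
  then show "Pop \<sigma> (Yop b i (Pop (inv \<sigma>) f)) A w = Yop b (\<sigma> i) f A w"
    unfolding Pop_def perm_act_def Yop_eq by simp
qed

lemma sumX:
  fixes f :: "complex^'N^'N \<Rightarrow> ('n::finite \<Rightarrow> 'N::finite) \<Rightarrow> complex"
  assumes f: "f \<in> VN" and A: "A \<in> sl"
  shows "(\<Sum>i\<in>UNIV. Xop i f) A w = 0"
proof -
  have "(\<Sum>i\<in>UNIV. Xop i f) A w = (\<Sum>i\<in>UNIV. act_on A i (f A) w)" by (simp add: sum_fun_apply Xop_def)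
  also have "\<dots> = dirderiv f A (A ** A - A ** A) w" using VN_inv[OF f A A] by simp
  also have "\<dots> = 0" using dirderiv_zero_dir[OF VN_pv[OF f]] by simp
  finally show ?thesis .
qed

theorem mainTheorem13:
  fixes b :: "nat \<Rightarrow> complex^'N^'N"
  assumes "CARD('N) dvd CARD('n::finite)"
    and "orthonormal_sl_basis b"
  shows
    "(\<forall>f\<in>(VN :: (complex^'N^'N \<Rightarrow> ('n \<Rightarrow> 'N) \<Rightarrow> complex) set).
        (\<forall>\<sigma>. \<sigma> permutes (UNIV::'n set) \<longrightarrow> Pop \<sigma> f \<in> VN) \<and>
        (\<forall>i. Xop i f \<in> VN) \<and> (\<forall>i. Yop b i f \<in> VN))
   \<and> eqV (Pop id) (\<lambda>f::('N,'n) vfun. f)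
   \<and> (\<forall>\<sigma> \<tau>. \<sigma> permutes (UNIV::'n set) \<longrightarrow> \<tau> permutes UNIV \<longrightarrow>
        eqV (Pop (\<sigma> \<circ> \<tau>)) (\<lambda>f::('N,'n) vfun. Pop \<sigma> (Pop \<tau> f)))
   \<and> (\<forall>\<sigma> (i::'n). \<sigma> permutes (UNIV::'n set) \<longrightarrow>
        eqV (\<lambda>f::('N,'n) vfun. Pop \<sigma> (Xop i (Pop (inv \<sigma>) f))) (Xop (\<sigma> i)) \<and>
        eqV (\<lambda>f::('N,'n) vfun. Pop \<sigma> (Yop b i (Pop (inv \<sigma>) f))) (Yop b (\<sigma> i)))
   \<and> eqV (\<lambda>f::('N,'n) vfun. \<Sum>i\<in>UNIV. Xop i f) (\<lambda>f::('N,'n) vfun. 0)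
   \<and> eqV (\<lambda>f::('N,'n) vfun. \<Sum>i\<in>UNIV. Yop b i f) (\<lambda>f::('N,'n) vfun. 0)
   \<and> (\<forall>(i::'n) j. eqV (opcomm (Xop i) (Xop j)) (\<lambda>f::('N,'n) vfun. 0) \<and> eqV (opcomm (Yop b i) (Yop b j)) (\<lambda>f::('N,'n) vfun. 0))
   \<and> (\<forall>(i::'n) j. i \<noteq> j \<longrightarrow>
        eqV (opcomm (Xop i) (Yop b j))
            (\<lambda>(f::('N,'n) vfun) A w. (1 / of_nat CARD('n)) * f A w
               - (of_nat CARD('N) / of_nat CARD('n)) * Pop (Transposition.transpose i j) f A w))"
  proof -
  have ob: "orthonormal_sl_basis b" by (rule assms(2))
  have c1: "\<forall>f\<in>(VN :: (complex^'N^'N \<Rightarrow> ('n \<Rightarrow> 'N) \<Rightarrow> complex) set).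
        (\<forall>\<sigma>. \<sigma> permutes (UNIV::'n set) \<longrightarrow> Pop \<sigma> f \<in> VN) \<and>
        (\<forall>i. Xop i f \<in> VN) \<and> (\<forall>i. Yop b i f \<in> VN)"
    using Pop_VN Xop_VN Yop_VN[OF _ ob] by blast
  have c2: "eqV (Pop id) (\<lambda>f::('N,'n) vfun. f)"
    unfolding eqV_def Pop_def perm_act_def by simp
  have c3: "\<forall>\<sigma> \<tau>. \<sigma> permutes (UNIV::'n set) \<longrightarrow> \<tau> permutes UNIV \<longrightarrow>
        eqV (Pop (\<sigma> \<circ> \<tau>)) (\<lambda>f::('N,'n) vfun. Pop \<sigma> (Pop \<tau> f))"
    unfolding eqV_def Pop_def perm_act_def by (simp add: o_assoc)
  have c4: "\<forall>\<sigma> (i::'n). \<sigma> permutes (UNIV::'n set) \<longrightarrow>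
        eqV (\<lambda>f::('N,'n) vfun. Pop \<sigma> (Xop i (Pop (inv \<sigma>) f))) (Xop (\<sigma> i)) \<and>
        eqV (\<lambda>f::('N,'n) vfun. Pop \<sigma> (Yop b i (Pop (inv \<sigma>) f))) (Yop b (\<sigma> i))"
    unfolding eqV_def by (simp add: conjX conjY)
  have c5: "eqV (\<lambda>f::('N,'n) vfun. \<Sum>i\<in>UNIV. Xop i f) (\<lambda>f::('N,'n) vfun. 0)"
    unfolding eqV_def using sumX by (auto intro!: ext)
  have c6: "eqV (\<lambda>f::('N,'n) vfun. \<Sum>i\<in>UNIV. Yop b i f) (\<lambda>f::('N,'n) vfun. 0)"
    unfolding eqV_def using sumY[OF _ ob] by (auto intro!: ext)
  have c7: "\<forall>(i::'n) j. eqV (opcomm (Xop i) (Xop j)) (\<lambda>f::('N,'n) vfun. 0) \<and> eqV (opcomm (Yop b i) (Yop b j)) (\<lambda>f::('N,'n) vfun. 0)"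
  proof (intro allI conjI)
    fix i j :: 'n
    show "eqV (opcomm (Xop i) (Xop j)) (\<lambda>f::('N,'n) vfun. 0)"
      unfolding eqV_def opcomm_def using XX by (auto intro!: ext)
    show "eqV (opcomm (Yop b i) (Yop b j)) (\<lambda>f::('N,'n) vfun. 0)"
      unfolding eqV_def opcomm_def
    proof (intro ballI ext)
      fix f :: "('N,'n) vfun" and A :: "complex^'N^'N" and w :: "'n \<Rightarrow> 'N"
      assume f: "f \<in> VN"
      show "(Yop b i (Yop b j f) - Yop b j (Yop b i f)) A w = 0 A w"
      proof (cases "i = j")
        case True then show ?thesis by simp
      next
        case False then show ?thesis using YY[OF VN_pv[OF f] False] by simp
      qed
    qed
  qed
  have c8: "\<forall>(i::'n) j. i \<noteq> j \<longrightarrow>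
        eqV (opcomm (Xop i) (Yop b j))
            (\<lambda>(f::('N,'n) vfun) A w. (1 / of_nat CARD('n)) * f A w
               - (of_nat CARD('N) / of_nat CARD('n)) * Pop (Transposition.transpose i j) f A w)"
  proof (intro allI impI)
    fix i j :: 'n assume ij: "i \<noteq> j"
    show "eqV (opcomm (Xop i) (Yop b j))
            (\<lambda>(f::('N,'n) vfun) A w. (1 / of_nat CARD('n)) * f A w
               - (of_nat CARD('N) / of_nat CARD('n)) * Pop (Transposition.transpose i j) f A w)"
      unfolding eqV_def opcomm_def
    proof (intro ballI ext)
      fix f :: "('N,'n) vfun" and A :: "complex^'N^'N" and w :: "'n \<Rightarrow> 'N"
      assume f: "f \<in> VN"
      show "(Xop i (Yop b j f) - Yop b j (Xop i f)) A w = (1 / of_nat CARD('n)) * f A w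
               - (of_nat CARD('N) / of_nat CARD('n)) * Pop (Transposition.transpose i j) f A w"
        using XY[OF VN_pv[OF f] ob ij, of A w] by (simp add: Pop_def perm_act_def)
    qed
  qed
  show ?thesis using c1 c2 c3 c4 c5 c6 c7 c8 by blast
qed

end
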